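(* Let $A>0$ and $\sigma\in\mathbb{R}$, and let $p(x)=\frac12 e^{-|x|}$. Suppose $(\varphi,\eta)\in H^1(\mathbb{R})\times H^1(\mathbb{R})$, not identically zero, with $\varphi(x),\eta(x)\to 0$ as $|x|\to\infty$, is a solitary wave of speed $c\in\mathbb{R}$ of the system $$u_t-u_{txx}-Au_x+3uu_x-\sigma(2u_xu_{xx}+uu_{xxx})+(1+\eta)\eta_x=0,\qquad \eta_t+\big((1+\eta)u\big)_x=0,$$ in the sense that in $\mathcal{D}'(\mathbb{R})$ $$\Big[-c\varphi+\tfrac{\sigma}{2}\varphi^2+p\ast\Big(-A\varphi+\tfrac{3-\sigma}{2}\varphi^2+\tfrac{\sigma}{2}\varphi_x^2+\tfrac12(1+\eta)^2\Big)\Big]_x=0,\qquad \big[-c\eta+(1+\eta)\varphi\big]_x=0.$$ Then $c\neq 0$ and $\varphi(x)\neq c$ for every $x\in\mathbb{R}$.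
   Context: A solitary wave of speed $c$ means a traveling wave $(u,\eta)(t,x)=(\varphi(x-ct),\eta(x-ct))$ solving the system in the weak (distributional) form displayed in the claim, with $(\varphi,\eta)\in H^1\times H^1$ nontrivial and vanishing at infinity. *)

theory Defs
  imports "HOL-Analysis.Analysis"
begin

definition test_function :: "(real \<Rightarrow> real) \<Rightarrow> bool" where
  "test_function \<psi> \<longleftrightarrow>
     (\<forall>k x. ((deriv ^^ k) \<psi>) differentiable (at x)) \<and> bounded {x. \<psi> x \<noteq> 0}"

definition L2 :: "(real \<Rightarrow> real) \<Rightarrow> bool" where
  "L2 f \<longleftrightarrow> f \<in> borel_measurable lborel \<and> integrable lborel (\<lambda>x. (f x)\<^sup>2)"

definition weak_deriv :: "(real \<Rightarrow> real) \<Rightarrow> (real \<Rightarrow> real) \<Rightarrow> bool" where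
  "weak_deriv f g \<longleftrightarrow>
     (\<forall>\<psi>. test_function \<psi> \<longrightarrow>
        (LINT x|lborel. f x * deriv \<psi> x) = - (LINT x|lborel. g x * \<psi> x))"

definition H1_with :: "(real \<Rightarrow> real) \<Rightarrow> (real \<Rightarrow> real) \<Rightarrow> bool" where
  "H1_with f f' \<longleftrightarrow> L2 f \<and> L2 f' \<and> weak_deriv f f'"

definition H1 :: "(real \<Rightarrow> real) \<Rightarrow> bool" where
  "H1 f \<longleftrightarrow> (\<exists>f'. H1_with f f')"

definition dist_deriv_zero :: "(real \<Rightarrow> real) \<Rightarrow> bool" where
  "dist_deriv_zero F \<longleftrightarrow> (\<forall>\<psi>. test_function \<psi> \<longrightarrow> (LINT x|lborel. F x * deriv \<psi> x) = 0)"

definition pker :: "real \<Rightarrow> real" where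
  "pker x = exp (- \<bar>x\<bar>) / 2"

definition pconv :: "(real \<Rightarrow> real) \<Rightarrow> real \<Rightarrow> real" where
  "pconv g x = (LINT y|lborel. pker (x - y) * g y)"

end

theory Submission
  imports Defs "HOL-Computational_Algebra.Polynomial" "HOL-Probability.Distributions"
begin


definition smooth :: "(real \<Rightarrow> real) \<Rightarrow> bool" where
  "smooth f \<longleftrightarrow> (\<forall>k x. ((deriv ^^ k) f) differentiable (at x))"

lemma smooth_chain:
  assumes "F 0 = f" "\<And>k x. (F k has_real_derivative F (Suc k) x) (at x)"
  shows "smooth f" "\<And>k. (deriv ^^ k) f = F k"
proof -
  show *: "(deriv ^^ k) f = F k" for k
  proof (induction k)
    case 0 then show ?case using assms by simp
  next
    case (Suc k)
    show ?case using assms(2)[of k] by (auto simp: Suc fun_eq_iff intro!: DERIV_imp_deriv)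
  qed
  show "smooth f" unfolding smooth_def using assms(2) * by (auto simp: real_differentiable_def)
qed

lemma smooth_deriv_has:
  assumes "smooth f" shows "(f has_real_derivative deriv f x) (at x)"
  using assms unfolding smooth_def
  by (metis DERIV_deriv_iff_real_differentiable funpow_0)

lemma smooth_iter_has:
  assumes "smooth f" shows "((deriv^^k) f has_real_derivative (deriv^^Suc k) f x) (at x)"
  using assms unfolding smooth_def
  by (simp add: DERIV_deriv_iff_real_differentiable)

lemma smooth_iff_chain:
  "smooth f \<longleftrightarrow> (\<exists>F. F 0 = f \<and> (\<forall>k x. (F k has_real_derivative F (Suc k) x) (at x)))"
proof
  assume "smooth f" then show "\<exists>F. F 0 = f \<and> (\<forall>k x. (F k has_real_derivative F (Suc k) x) (at x))"
    by (intro exI[of _ "\<lambda>k. (deriv^^k) f"]) (use smooth_iter_has in auto)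
qed (auto intro: smooth_chain)

lemma smooth_deriv: "smooth f \<Longrightarrow> smooth (deriv f)"
  unfolding smooth_def by (metis funpow_Suc_right o_apply)

lemma smooth_add: "smooth f \<Longrightarrow> smooth g \<Longrightarrow> smooth (\<lambda>x. f x + g x)"
  unfolding smooth_iff_chain
  apply (elim exE conjE)
  subgoal for F G by (rule exI[of _ "\<lambda>k x. F k x + G k x"]) (auto intro!: derivative_eq_intros)
  done

lemma smooth_cmult: "smooth f \<Longrightarrow> smooth (\<lambda>x. c * f x)"
  unfolding smooth_iff_chain
  apply (elim exE conjE)
  subgoal for F by (rule exI[of _ "\<lambda>k x. c * F k x"]) (auto intro!: derivative_eq_intros)
  done

lemma smooth_minus: "smooth f \<Longrightarrow> smooth g \<Longrightarrow> smooth (\<lambda>x. f x - g x)"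
  using smooth_add[of f "\<lambda>x. (-1) * g x"] smooth_cmult[of g "-1"] by simp

lemma smooth_const: "smooth (\<lambda>x. c)"
  by (rule smooth_chain(1)[of "\<lambda>k x. if k = 0 then c else 0"]) (auto intro!: derivative_eq_intros)

lemma smooth_affine: assumes "smooth f" shows "smooth (\<lambda>x. f (a * x + b))"
proof -
  obtain F where F: "F 0 = f" "\<forall>k x. (F k has_real_derivative F (Suc k) x) (at x)"
    using assms unfolding smooth_iff_chain by blast
  show ?thesis unfolding smooth_iff_chain
  proof (rule exI[of _ "\<lambda>k x. a^k * F k (a * x + b)"], intro conjI allI)
    fix k x
    have "((\<lambda>x. F k (a * x + b)) has_real_derivative F (Suc k) (a*x+b) * a) (at x)"
      by (rule DERIV_chain2[where f="F k"]) (use F in \<open>auto intro!: derivative_eq_intros\<close>)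
    from DERIV_cmult[OF this, of "a^k"]
    show "((\<lambda>x. a ^ k * F k (a * x + b)) has_real_derivative a ^ Suc k * F (Suc k) (a * x + b)) (at x)"
      by (simp add: algebra_simps)
  qed (use F in auto)
qed

lemma smooth_iter_add:
  assumes "smooth f" "smooth g"
  shows "(deriv^^k) (\<lambda>x. f x + g x) = (\<lambda>x. (deriv^^k) f x + (deriv^^k) g x)"
proof (induction k)
  case (Suc k)
  show ?case
    using smooth_iter_has[OF assms(1), of k] smooth_iter_has[OF assms(2), of k]
    by (auto simp: Suc fun_eq_iff intro!: DERIV_imp_deriv derivative_eq_intros)
qed simp

lemma smooth_mult_aux:
  "\<forall>f g. smooth f \<longrightarrow> smooth g \<longrightarrow> (\<forall>j\<le>k. \<forall>x. (deriv^^j) (\<lambda>x. f x * g x) differentiable (at x))"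
proof (induction k)
  case 0
  show ?case
    by (auto simp: smooth_def) (metis differentiable_mult funpow_0)
next
  case (Suc k)
  show ?case
  proof (intro allI impI)
    fix f g j x assume f: "smooth f" and g: "smooth g" and j: "j \<le> Suc k"
    show "(deriv^^j) (\<lambda>x. f x * g x) differentiable (at x)"
    proof (cases "j \<le> k")
      case True then show ?thesis using Suc f g by blast
    next
      case False
      then have jk: "j = Suc k" using j by simp
      have d: "deriv (\<lambda>x. f x * g x) = (\<lambda>x. deriv f x * g x + f x * deriv g x)"
        using smooth_deriv_has[OF f] smooth_deriv_has[OF g]
        by (auto simp: fun_eq_iff intro!: DERIV_imp_deriv derivative_eq_intros)
      have e: "(deriv^^j) (\<lambda>x. f x * g x) = (deriv^^k) (\<lambda>x. deriv f x * g x + f x * deriv g x)"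
        by (simp add: jk funpow_Suc_right d del: funpow.simps) 
      have "(deriv^^k) (\<lambda>x. deriv f x * g x + f x * deriv g x) = (\<lambda>x. (deriv^^k) (\<lambda>x. deriv f x * g x) x + (deriv^^k) (\<lambda>x. f x * deriv g x) x)"
      proof -
        have IH1: "\<And>j x. j \<le> k \<Longrightarrow> (deriv^^j) (\<lambda>x. deriv f x * g x) differentiable (at x)"
          using Suc smooth_deriv[OF f] g by blast
        have IH2: "\<And>j x. j \<le> k \<Longrightarrow> (deriv^^j) (\<lambda>x. f x * deriv g x) differentiable (at x)"
          using Suc smooth_deriv[OF g] f by blast
        have "\<forall>j\<le>k. (deriv^^j) (\<lambda>x. deriv f x * g x + f x * deriv g x) = (\<lambda>x. (deriv^^j) (\<lambda>x. deriv f x * g x) x + (deriv^^j) (\<lambda>x. f x * deriv g x) x)"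
        proof (intro allI impI)
          fix j assume "j \<le> k"
          then show "(deriv^^j) (\<lambda>x. deriv f x * g x + f x * deriv g x) = (\<lambda>x. (deriv^^j) (\<lambda>x. deriv f x * g x) x + (deriv^^j) (\<lambda>x. f x * deriv g x) x)"
          proof (induction j)
            case (Suc j)
            then have "j \<le> k" "j < k" by auto
            have eq: "(deriv^^Suc j) (\<lambda>x. deriv f x * g x + f x * deriv g x) = deriv (\<lambda>x. (deriv^^j) (\<lambda>x. deriv f x * g x) x + (deriv^^j) (\<lambda>x. f x * deriv g x) x)"
              using Suc.IH[OF \<open>j \<le> k\<close>] by simp
            show ?case unfolding eq
              using IH1[OF \<open>j \<le> k\<close>] IH2[OF \<open>j \<le> k\<close>]
              by (auto simp: fun_eq_iff DERIV_deriv_iff_real_differentiable[symmetric] intro!: DERIV_imp_deriv derivative_eq_intros)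
          qed simp
        qed
        then show ?thesis by simp
      qed
      then show ?thesis unfolding e
        using Suc smooth_deriv[OF f] smooth_deriv[OF g] f g
        by (auto intro!: differentiable_add)
    qed
  qed
qed

lemma smooth_mult: "smooth f \<Longrightarrow> smooth g \<Longrightarrow> smooth (\<lambda>x. f x * g x)"
  using smooth_mult_aux unfolding smooth_def by blast



lemma poly_exp_at_top: "((\<lambda>s::real. poly p s * exp (- s)) \<longlongrightarrow> 0) at_top"
proof -
  have "((\<lambda>s::real. \<Sum>i\<le>degree p. coeff p i * (s ^ i / exp s)) \<longlongrightarrow> 0) at_top"
    by (intro tendsto_null_sum tendsto_mult_right_zero tendsto_power_div_exp_0)
  moreover have "poly p s * exp (- s) = (\<Sum>i\<le>degree p. coeff p i * (s ^ i / exp s))" for s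
  proof -
    have "(\<Sum>i\<le>degree p. coeff p i * (s ^ i / exp s)) = (\<Sum>i\<le>degree p. coeff p i * s ^ i) / exp s"
      by (simp add: sum_divide_distrib)
    then show ?thesis by (simp add: poly_altdef exp_minus divide_inverse)
  qed
  ultimately show ?thesis by simp
qed

lemma poly_exp_at_right: "((\<lambda>t::real. poly p (1/t) * exp (- (1/t))) \<longlongrightarrow> 0) (at_right 0)"
proof -
  have "((\<lambda>t::real. poly p (inverse t) * exp (- (inverse t))) \<longlongrightarrow> 0) (at_right 0)"
    using filterlim_compose[OF poly_exp_at_top filterlim_inverse_at_top_right] by (simp add: o_def)
  then show ?thesis by (simp add: inverse_eq_divide)
qed

definition Ecut :: "real \<Rightarrow> real" where "Ecut t = (if t > 0 then exp (- (1/t)) else 0)"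

fun Pk :: "nat \<Rightarrow> real poly" where
  "Pk 0 = 1"
| "Pk (Suc k) = [:0,0,1:] * (Pk k - pderiv (Pk k))"

definition EF :: "nat \<Rightarrow> real \<Rightarrow> real" where
  "EF k t = (if t > 0 then poly (Pk k) (1/t) * exp (- (1/t)) else 0)"

lemma EF_pos_deriv:
  assumes "t > 0"
  shows "((\<lambda>t. poly p (1/t) * exp (- (1/t))) has_real_derivative
           poly ([:0,0,1:] * (p - pderiv p)) (1/t) * exp (- (1/t))) (at t)"
proof -
  have d1: "((\<lambda>t. 1/t) has_real_derivative - (1/t^2)) (at t)"
    using assms by (auto intro!: derivative_eq_intros simp: power2_eq_square field_simps)
  have "((\<lambda>t. poly p (1/t)) has_real_derivative poly (pderiv p) (1/t) * (- (1/t^2))) (at t)"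
    by (rule DERIV_chain2[OF poly_DERIV d1])
  moreover have "((\<lambda>t. exp (- (1/t))) has_real_derivative exp (- (1/t)) * (1/t^2)) (at t)"
    using DERIV_chain2[OF DERIV_exp DERIV_minus[OF d1]] by simp
  ultimately have "((\<lambda>t. poly p (1/t) * exp (- (1/t))) has_real_derivative
     poly (pderiv p) (1/t) * (- (1/t^2)) * exp (- (1/t)) + (exp (- (1/t)) * (1/t^2)) * poly p (1/t)) (at t)"
    by (rule DERIV_mult)
  then show ?thesis
    by (simp add: algebra_simps power2_eq_square)
qed

lemma EF_deriv: "(EF k has_real_derivative EF (Suc k) t) (at t)"
proof (cases "t > 0")
  case True
  show ?thesis
  proof (rule has_field_derivative_transform_within_open[where S="{0<..}"])
    show "((\<lambda>t. poly (Pk k) (1/t) * exp (- (1/t))) has_real_derivative EF (Suc k) t) (at t)"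
      using EF_pos_deriv[OF True, of "Pk k"] True by (simp add: EF_def)
  qed (use True in \<open>auto simp: EF_def\<close>)
next
  case False
  show ?thesis
  proof (cases "t < 0")
    case True
    show ?thesis
    proof (rule has_field_derivative_transform_within_open[where S="{..<0}" and f="\<lambda>_. 0"])
      show "((\<lambda>_. 0) has_real_derivative EF (Suc k) t) (at t)"
        using True by (simp add: EF_def)
    qed (use True in \<open>auto simp: EF_def\<close>)
  next
    case False
    with \<open>\<not> t > 0\<close> have t0: "t = 0" by simp
    have "((\<lambda>y. (EF k y - EF k 0) / (y - 0)) \<longlongrightarrow> 0) (at 0)"
    proof (rule filterlim_split_at)
      show "((\<lambda>y. (EF k y - EF k 0) / (y - 0)) \<longlongrightarrow> 0) (at_left 0)"
        by (rule tendsto_eventually) (auto simp: EF_def eventually_at_left_field intro: exI[of _ "-1"])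
      have "((\<lambda>t. poly (pCons 0 (Pk k)) (1/t) * exp (- (1/t))) \<longlongrightarrow> 0) (at_right 0)"
        by (rule poly_exp_at_right)
      then show "((\<lambda>y. (EF k y - EF k 0) / (y - 0)) \<longlongrightarrow> 0) (at_right 0)"
        apply (rule tendsto_cong[THEN iffD1, rotated])
        apply (auto simp: EF_def eventually_at_right_field intro!: exI[of _ 1])
        done
    qed
    then show ?thesis using t0
      by (simp add: has_field_derivative_iff EF_def)
  qed
qed

lemma smooth_Ecut: "smooth Ecut"
proof (rule smooth_chain(1)[of EF])
  show "EF 0 = Ecut" by (auto simp: EF_def Ecut_def fun_eq_iff)
qed (rule EF_deriv)



lemma smooth_cont: "smooth f \<Longrightarrow> continuous_on UNIV f"
  by (metis DERIV_isCont continuous_at_imp_continuous_on smooth_deriv_has)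

lemma smooth_iter: "smooth f \<Longrightarrow> smooth ((deriv^^k) f)"
  by (induction k) (auto intro: smooth_deriv)

lemma integrable_cont_supp:
  fixes f :: "real \<Rightarrow> real"
  assumes "continuous_on UNIV f" "\<And>x. x \<notin> {a..b} \<Longrightarrow> f x = 0"
  shows "integrable lborel f" "(LINT x|lborel. f x) = integral {a..b} f"
proof -
  have e: "f = (\<lambda>x. f x * indicator {a..b} x)"
    using assms(2) by (auto simp: fun_eq_iff indicator_def)
  show i: "integrable lborel f"
    by (subst e, rule borel_integrable_atLeastAtMost)
       (use assms(1) in \<open>auto simp: continuous_on_eq_continuous_at\<close>)
  have "(f has_integral (LINT x|lborel. f x)) UNIV"
    by (rule has_integral_integral_real[OF i])
  moreover have "(\<lambda>x. if x \<in> {a..b} then f x else 0) = f"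
    using assms(2) by auto
  ultimately have "(f has_integral (LINT x|lborel. f x)) {a..b}"
    using has_integral_restrict_UNIV[of "{a..b}" f] by simp
  then show "(LINT x|lborel. f x) = integral {a..b} f" by (simp add: integral_unique)
qed

definition bump :: "real \<Rightarrow> real" where "bump t = Ecut (1 + t) * Ecut (1 - t)"

lemma smooth_bump: "smooth bump"
proof -
  have "smooth (\<lambda>t. Ecut (1 * t + 1))" "smooth (\<lambda>t. Ecut ((-1) * t + 1))"
    by (rule smooth_affine[OF smooth_Ecut])+
  then have "smooth (\<lambda>t. Ecut (1 * t + 1) * Ecut ((-1) * t + 1))" by (rule smooth_mult)
  then show ?thesis unfolding bump_def by (simp add: add.commute)
qed

lemma bump_nonneg: "bump t \<ge> 0"
  by (auto simp: bump_def Ecut_def)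

lemma bump_zero: "\<bar>t\<bar> \<ge> 1 \<Longrightarrow> bump t = 0"
  by (auto simp: bump_def Ecut_def)

lemma bump_lower: "\<bar>t\<bar> \<le> 1/2 \<Longrightarrow> bump t \<ge> exp (-2) * exp (-2)"
proof -
  assume t: "\<bar>t\<bar> \<le> 1/2"
  have "exp (-2) \<le> Ecut s" if "s \<ge> 1/2" for s
  proof -
    have "1/s \<le> 2" using that by (simp add: field_simps)
    then show ?thesis using that by (auto simp: Ecut_def)
  qed
  then have "exp (-2) \<le> Ecut (1+t)" "exp (-2) \<le> Ecut (1-t)" using t by auto
  moreover have "0 < exp (-2::real)" by simp
  ultimately show ?thesis unfolding bump_def by (intro mult_mono) linarith+
qed

definition Zb :: real where "Zb = (LINT t|lborel. bump t)"

lemma bump_integrable: "integrable lborel bump"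
  by (rule integrable_cont_supp(1)[of _ "-1" 1]) (auto intro: smooth_cont smooth_bump bump_zero)

lemma Zb_pos: "Zb > 0"
proof -
  have ii: "integrable lborel (\<lambda>t. exp (-2::real) * exp (-2) * indicator {-1/2..1/2::real} t)"
    by (rule borel_integrable_atLeastAtMost) auto
  have "(LINT t|lborel. exp (-2::real) * exp (-2) * indicator {-1/2..1/2::real} t) \<le> Zb"
    unfolding Zb_def
    by (intro integral_mono bump_integrable ii)
       (auto simp: indicator_def bump_nonneg intro!: bump_lower)
  moreover have "(LINT t|lborel. exp (-2::real) * exp (-2) * indicator {-1/2..1/2::real} t) = exp (-2) * exp (-2)"
    by simp
  ultimately show ?thesis
    by (smt (verit) exp_gt_zero mult_pos_pos)
qed

definition rho :: "real \<Rightarrow> real" where "rho t = bump t / Zb"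

lemma smooth_rho: "smooth rho"
  unfolding rho_def using smooth_cmult[OF smooth_bump, of "1/Zb"] by simp

lemma rho_nonneg: "rho t \<ge> 0"
  using Zb_pos bump_nonneg by (simp add: rho_def)

lemma rho_zero: "\<bar>t\<bar> \<ge> 1 \<Longrightarrow> rho t = 0"
  by (simp add: rho_def bump_zero)

lemma rho_cont: "continuous_on UNIV rho"
  by (rule smooth_cont[OF smooth_rho])

lemma rho_integrable: "integrable lborel rho"
  by (rule integrable_cont_supp(1)[of _ "-1" 1]) (auto intro: rho_cont rho_zero)

lemma rho_int: "(LINT t|lborel. rho t) = 1"
  using Zb_pos by (simp add: rho_def Zb_def)

lemma rho_iter_zero: "\<bar>t\<bar> > 1 \<Longrightarrow> (deriv^^k) rho t = 0"
proof (induction k arbitrary: t)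
  case 0 then show ?case by (simp add: rho_zero)
next
  case (Suc k)
  have "((deriv^^k) rho has_real_derivative 0) (at t)"
  proof (rule has_field_derivative_transform_within_open[where S="{t. \<bar>t\<bar> > 1}" and f="\<lambda>_. 0"])
    show "open {t::real. \<bar>t\<bar> > 1}"
      by (rule open_Collect_less) (auto intro: continuous_intros)
  qed (use Suc in auto)
  then show ?case by (simp add: DERIV_imp_deriv)
qed

definition Rf :: "real \<Rightarrow> real" where "Rf t = integral {-2..t} rho"

lemma Rf_low: "t \<le> -1 \<Longrightarrow> Rf t = 0"
proof -
  assume t: "t \<le> -1"
  have "integral {-2..t} rho = integral {-2..t} (\<lambda>_. 0)"
    by (rule integral_cong) (use t in \<open>auto intro: rho_zero\<close>)
  then show ?thesis by (simp add: Rf_def)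
qed

lemma Rf_high: "t \<ge> 1 \<Longrightarrow> Rf t = 1"
proof -
  assume t: "t \<ge> 1"
  have "\<And>x. x \<notin> {-2..t} \<Longrightarrow> rho x = 0"
    using t by (intro rho_zero) auto
  then show ?thesis
    using integrable_cont_supp(2)[of rho "-2" t] rho_cont rho_int
    by (auto simp: Rf_def)
qed

lemma Rf_deriv: "(Rf has_real_derivative rho t) (at t)"
proof (cases "t > -2")
  case True
  have "(Rf has_real_derivative rho t) (at t within {-2..t+1})"
    unfolding Rf_def
    by (rule integral_has_real_derivative) (use True in \<open>auto intro: continuous_on_subset[OF rho_cont]\<close>)
  then have "(Rf has_real_derivative rho t) (at t within {-2<..<t+1})"
    by (rule DERIV_subset) auto
  moreover have "at t within {-2<..<t+1} = at t" by (rule at_within_open) (use True in auto)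
  ultimately show ?thesis by simp
next
  case False
  show ?thesis
  proof (rule has_field_derivative_transform_within_open[where S="{..<-1}" and f="\<lambda>_. 0"])
    show "((\<lambda>_. 0) has_real_derivative rho t) (at t)"
      using False by (simp add: rho_zero)
  qed (use False in \<open>auto simp: Rf_low\<close>)
qed

lemma smooth_Rf: "smooth Rf"
proof (rule smooth_chain(1)[of "\<lambda>k. if k = 0 then Rf else (deriv^^(k-1)) rho"])
  fix k x
  show "((if k = 0 then Rf else (deriv ^^ (k - 1)) rho) has_real_derivative
          (if Suc k = 0 then Rf else (deriv ^^ (Suc k - 1)) rho) x) (at x)"
  proof (cases k)
    case 0 then show ?thesis using Rf_deriv by simp
  next
    case (Suc j) then show ?thesis using smooth_iter_has[OF smooth_rho, of j] by simp
  qed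
qed simp

lemma Rf_mono: assumes "s \<le> t" shows "Rf s \<le> Rf t"
proof (rule DERIV_nonneg_imp_nondecreasing[OF assms])
  fix x show "\<exists>y. DERIV Rf x :> y \<and> y \<ge> 0"
    using Rf_deriv[of x] rho_nonneg[of x] by blast
qed

lemma Rf_bounds: "0 \<le> Rf t" "Rf t \<le> 1"
proof -
  show "0 \<le> Rf t"
    using Rf_mono[of "-1" t] Rf_low[of t] Rf_low[of "-1"] by (cases "t \<le> -1") auto
  show "Rf t \<le> 1"
    using Rf_mono[of t 1] Rf_high[of t] Rf_high[of 1] by (cases "t \<ge> 1") auto
qed



lemma cont_scale: fixes f :: "real \<Rightarrow> real" shows "continuous_on UNIV f \<Longrightarrow> continuous_on UNIV (\<lambda>x. f ((x - a) / e))"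
proof (rule continuous_on_compose2[of UNIV f])
  have "continuous_on UNIV (\<lambda>x::real. (x - a) * inverse e)" by (intro continuous_intros)
  then show "continuous_on UNIV (\<lambda>x. (x - a) / e)" by (simp add: divide_inverse)
qed auto

lemma smooth_scale: fixes f :: "real \<Rightarrow> real" shows "smooth f \<Longrightarrow> smooth (\<lambda>x. f ((x - a) / e))"
proof -
  assume "smooth f"
  from smooth_affine[OF this, of "1/e" "-a/e"]
  show ?thesis by (simp add: diff_divide_distrib)
qed

lemma deriv_scale:
  fixes f :: "real \<Rightarrow> real"
  assumes "(f has_real_derivative f' ((x - a) / e)) (at ((x - a) / e))"
  shows "((\<lambda>x. f ((x - a) / e)) has_real_derivative f' ((x - a) / e) / e) (at x)"
proof -
  have "((\<lambda>x. f ((x - a) / e)) has_real_derivative f' ((x - a) / e) * (1 / e)) (at x)"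
  proof (rule DERIV_chain2[of f "f' ((x - a) / e)" "\<lambda>x. (x - a) / e" x, OF assms])
    have "(\<lambda>x. (x - a) / e) = (\<lambda>x. (x - a) * inverse e)" by (simp add: divide_inverse)
    moreover have "((\<lambda>x. (x - a) * inverse e) has_real_derivative 1 * inverse e) (at x)"
      by (auto intro!: derivative_eq_intros)
    ultimately show "((\<lambda>x. (x - a) / e) has_real_derivative 1 / e) (at x)" by (simp add: divide_inverse)
  qed
  then show ?thesis by simp
qed

lemma test_functionI: "smooth \<psi> \<Longrightarrow> bounded {x. \<psi> x \<noteq> 0} \<Longrightarrow> test_function \<psi>"
  by (simp add: test_function_def smooth_def)

lemma abs_div_ge1: "e > 0 \<Longrightarrow> \<bar>x - a\<bar> \<ge> e \<Longrightarrow> \<bar>(x - a) / e\<bar> \<ge> (1::real)"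
  by (simp add: abs_divide le_divide_eq)

lemma cont_rho_scale: "e > 0 \<Longrightarrow> continuous_on UNIV F \<Longrightarrow> continuous_on UNIV (\<lambda>x. F x * (rho ((x - a) / e) / e))"
  by (rule continuous_on_mult, assumption, rule continuous_on_divide[OF cont_scale[OF rho_cont] continuous_on_const]) auto

lemma rho_scale_integrable: "e > 0 \<Longrightarrow> continuous_on UNIV F \<Longrightarrow>
    integrable lborel (\<lambda>x. F x * (rho ((x - a) / e) / e))"
proof (rule integrable_cont_supp(1)[of _ "a - e" "a + e"])
  assume "e > 0" "continuous_on UNIV F"
  then show "continuous_on UNIV (\<lambda>x. F x * (rho ((x - a) / e) / e))"
    by (rule cont_rho_scale)
  fix x assume "x \<notin> {a - e..a + e}"
  then have "\<bar>x - a\<bar> \<ge> e" by auto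
  then have "\<bar>(x - a) / e\<bar> \<ge> 1" using \<open>e > 0\<close> by (rule abs_div_ge1[rotated])
  then show "F x * (rho ((x - a) / e) / e) = 0" by (simp add: rho_zero)
qed

lemma rho_scale_int: "e > 0 \<Longrightarrow> (LINT x|lborel. rho ((x - a) / e) / e) = 1"
proof -
  assume e: "e > 0"
  have "(LINT x|lborel. rho ((x - a) / e) / e) = \<bar>e\<bar> * (LINT x|lborel. rho ((a + e * x - a) / e) / e)"
    using lborel_integral_real_affine[of e "\<lambda>x. rho ((x - a) / e) / e" a] e by simp
  also have "\<dots> = 1" using e rho_int by simp
  finally show ?thesis .
qed

lemma mollify_lim:
  assumes F: "continuous_on UNIV F"
  shows "((\<lambda>e. LINT x|lborel. F x * (rho ((x - a) / e) / e)) \<longlongrightarrow> F a) (at_right 0)"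
proof (rule tendstoI)
  fix d :: real assume d: "d > 0"
  have "isCont F a" using F by (simp add: continuous_on_eq_continuous_at)
  then obtain r where r: "r > 0" "\<And>x. \<bar>x - a\<bar> < r \<Longrightarrow> \<bar>F x - F a\<bar> < d / 2"
    using d unfolding continuous_at_eps_delta dist_real_def
    by (metis half_gt_zero)
  have *: "dist (LINT x|lborel. F x * (rho ((x - a) / e) / e)) (F a) < d" if e: "0 < e" "e < r" for e
  proof -
    have i1: "integrable lborel (\<lambda>x. F x * (rho ((x - a) / e) / e))"
      using e F by (intro rho_scale_integrable)
    have i2: "integrable lborel (\<lambda>x. F a * (rho ((x - a) / e) / e))"
      using e by (intro rho_scale_integrable) auto
    have i3: "integrable lborel (\<lambda>x. d / 2 * (rho ((x - a) / e) / e))"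
      using e by (intro rho_scale_integrable) auto
    have "(LINT x|lborel. F x * (rho ((x - a) / e) / e)) - F a
        = (LINT x|lborel. F x * (rho ((x - a) / e) / e)) - (LINT x|lborel. F a * (rho ((x - a) / e) / e))"
      using rho_scale_int[OF e(1), of a] by simp
    also have "\<dots> = (LINT x|lborel. F x * (rho ((x - a) / e) / e) - F a * (rho ((x - a) / e) / e))"
      by (rule Bochner_Integration.integral_diff[OF i1 i2, symmetric])
    also have "(\<lambda>x. F x * (rho ((x - a) / e) / e) - F a * (rho ((x - a) / e) / e)) = (\<lambda>x. (F x - F a) * (rho ((x - a) / e) / e))"
      by (rule ext) (simp add: left_diff_distrib diff_divide_distrib)
    finally have eq: "(LINT x|lborel. F x * (rho ((x - a) / e) / e)) - F a = (LINT x|lborel. (F x - F a) * (rho ((x - a) / e) / e))" .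
    have "\<bar>LINT x|lborel. (F x - F a) * (rho ((x - a) / e) / e)\<bar> \<le> (LINT x|lborel. d / 2 * (rho ((x - a) / e) / e))"
    proof (rule integral_abs_bound_integral)
      have "(\<lambda>x. F x * (rho ((x - a) / e) / e) - F a * (rho ((x - a) / e) / e)) = (\<lambda>x. (F x - F a) * (rho ((x - a) / e) / e))"
        by (rule ext) (simp add: left_diff_distrib diff_divide_distrib)
      then show "integrable lborel (\<lambda>x. (F x - F a) * (rho ((x - a) / e) / e))"
        using Bochner_Integration.integrable_diff[OF i1 i2] by simp
      show "integrable lborel (\<lambda>x. d / 2 * (rho ((x - a) / e) / e))" by (rule i3)
      fix x
      show "\<bar>(F x - F a) * (rho ((x - a) / e) / e)\<bar> \<le> d / 2 * (rho ((x - a) / e) / e)"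
      proof (cases "\<bar>x - a\<bar> < e")
        case True
        then have "\<bar>F x - F a\<bar> \<le> d / 2" using r(2)[of x] e by auto
        moreover have "rho ((x - a) / e) / e \<ge> 0" using rho_nonneg[of "(x - a) / e"] e by simp
        ultimately have "\<bar>F x - F a\<bar> * (rho ((x - a) / e) / e) \<le> d / 2 * (rho ((x - a) / e) / e)"
          by (rule mult_right_mono)
        then show ?thesis using rho_nonneg[of "(x - a) / e"] e by (simp add: abs_mult)
      next
        case False
        then have "\<bar>(x - a) / e\<bar> \<ge> 1" using e by (intro abs_div_ge1) auto
        then show ?thesis by (simp add: rho_zero)
      qed
    qed
    also have "\<dots> = d / 2" using rho_scale_int[OF e(1), of a] by simp
    finally have le: "\<bar>LINT x|lborel. (F x - F a) * (rho ((x - a) / e) / e)\<bar> \<le> d / 2" .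
    have "dist (LINT x|lborel. F x * (rho ((x - a) / e) / e)) (F a) = \<bar>LINT x|lborel. (F x - F a) * (rho ((x - a) / e) / e)\<bar>"
      by (simp only: dist_real_def eq)
    then show ?thesis using le d by linarith
  qed
  then show "\<forall>\<^sub>F e in at_right 0. dist (LINT x|lborel. F x * (rho ((x - a) / e) / e)) (F a) < d"
    unfolding eventually_at_right_field
  proof (intro exI[of _ r] conjI allI impI)
    fix e :: real assume "0 < e" "e < r" then show "dist (LINT x|lborel. F x * (rho ((x - a) / e) / e)) (F a) < d"
      by (rule *)
  qed (rule r(1))
qed

lemma psi2_test: "e > 0 \<Longrightarrow> test_function (\<lambda>x. Rf ((x - a) / e) - Rf ((x - b) / e))"
proof (rule test_functionI)
  assume e: "e > 0"
  show "smooth (\<lambda>x. Rf ((x - a) / e) - Rf ((x - b) / e))"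
    by (intro smooth_minus smooth_scale smooth_Rf)
  have "{x. Rf ((x - a) / e) - Rf ((x - b) / e) \<noteq> 0} \<subseteq> {min a b - e .. max a b + e}"
  proof (rule subsetI, rule ccontr)
    fix x assume x: "x \<in> {x. Rf ((x - a) / e) - Rf ((x - b) / e) \<noteq> 0}" "x \<notin> {min a b - e .. max a b + e}"
    show False
    proof (cases "x < min a b - e")
      case True
      then have "(x - a) / e \<le> -1" "(x - b) / e \<le> -1" using e by (auto simp: field_simps)
      then show False using x(1) by (simp add: Rf_low)
    next
      case False
      then have "x > max a b + e" using x(2) by auto
      then have "(x - a) / e \<ge> 1" "(x - b) / e \<ge> 1" using e by (auto simp: field_simps)
      then show False using x(1) by (simp add: Rf_high)
    qed
  qed
  then show "bounded {x. Rf ((x - a) / e) - Rf ((x - b) / e) \<noteq> 0}"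
    by (rule bounded_subset[OF bounded_closed_interval])
qed

lemma psi2_deriv: "deriv (\<lambda>x. Rf ((x - a) / e) - Rf ((x - b) / e)) = (\<lambda>x. rho ((x - a) / e) / e - rho ((x - b) / e) / e)"
proof
  fix x
  show "deriv (\<lambda>x. Rf ((x - a) / e) - Rf ((x - b) / e)) x = rho ((x - a) / e) / e - rho ((x - b) / e) / e"
    by (rule DERIV_imp_deriv, rule DERIV_diff; rule deriv_scale; rule Rf_deriv)
qed

lemma dist_deriv_zero_const:
  assumes F: "continuous_on UNIV F" and D: "dist_deriv_zero F"
  shows "F a = F b"
proof -
  have lim: "((\<lambda>e. (LINT x|lborel. F x * (rho ((x - a) / e) / e)) - (LINT x|lborel. F x * (rho ((x - b) / e) / e))) \<longlongrightarrow> F a - F b) (at_right 0)"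
    by (intro tendsto_diff mollify_lim F)
  have ev: "\<forall>\<^sub>F e in at_right 0. (LINT x|lborel. F x * (rho ((x - a) / e) / e)) - (LINT x|lborel. F x * (rho ((x - b) / e) / e)) = 0"
    unfolding eventually_at_right_field
  proof (intro exI[of _ 1] conjI allI impI)
    fix e :: real assume e: "0 < e" "e < 1"
    have "0 = (LINT x|lborel. F x * deriv (\<lambda>x. Rf ((x - a) / e) - Rf ((x - b) / e)) x)"
      using D psi2_test[OF e(1), of a b] unfolding dist_deriv_zero_def by simp
    also have "\<dots> = (LINT x|lborel. F x * (rho ((x - a) / e) / e) - F x * (rho ((x - b) / e) / e))"
      by (simp add: psi2_deriv right_diff_distrib)
    also have "\<dots> = (LINT x|lborel. F x * (rho ((x - a) / e) / e)) - (LINT x|lborel. F x * (rho ((x - b) / e) / e))"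
      by (intro Bochner_Integration.integral_diff rho_scale_integrable e(1) F)
    finally show "(LINT x|lborel. F x * (rho ((x - a) / e) / e)) - (LINT x|lborel. F x * (rho ((x - b) / e) / e)) = 0" by simp
  qed simp
  have lim2: "((\<lambda>e. (LINT x|lborel. F x * (rho ((x - a) / e) / e)) - (LINT x|lborel. F x * (rho ((x - b) / e) / e))) \<longlongrightarrow> 0) (at_right 0)"
    by (rule tendsto_eventually[OF ev])
  have "F a - F b = 0"
    by (rule tendsto_unique[OF _ lim lim2]) simp
  then show ?thesis by simp
qed



lemma cont_meas: "continuous_on UNIV (f::real \<Rightarrow> real) \<Longrightarrow> f \<in> borel_measurable lborel"
  by (simp add: borel_measurable_continuous_onI)

lemma L2_loc_integrable:
  assumes "L2 g"
  shows "integrable lborel (\<lambda>x. g x * indicator {c..d} x)"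
proof -
  have m: "g \<in> borel_measurable lborel" using assms by (simp add: L2_def)
  have i1: "integrable lborel (\<lambda>x. (g x)\<^sup>2)" using assms by (simp add: L2_def)
  have i2: "integrable lborel (\<lambda>x. 1 * indicator {c..d} x :: real)"
    by (rule borel_integrable_atLeastAtMost) auto
  have "integrable lborel (\<lambda>x. (g x)\<^sup>2 + 1 * indicator {c..d} x)"
    using i1 i2 by (rule Bochner_Integration.integrable_add)
  then show ?thesis
  proof (rule Bochner_Integration.integrable_bound)
    show "(\<lambda>x. g x * indicator {c..d} x) \<in> borel_measurable lborel" using m by measurable
    show "AE x in lborel. norm (g x * indicator {c..d} x) \<le> norm ((g x)\<^sup>2 + 1 * indicator {c..d} x)"
    proof (intro AE_I2)
      fix x
      have "0 \<le> (\<bar>g x\<bar> - 1)\<^sup>2" by simp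
      then have "2 * \<bar>g x\<bar> \<le> \<bar>g x\<bar>\<^sup>2 + 1" by (simp add: power2_eq_square algebra_simps)
      then have "\<bar>g x\<bar> \<le> (g x)\<^sup>2 + 1" by simp
      then show "norm (g x * indicator {c..d} x) \<le> norm ((g x)\<^sup>2 + 1 * indicator {c..d} x)"
        by (auto simp: indicator_def)
    qed
  qed
qed

definition psiI :: "real \<Rightarrow> real \<Rightarrow> real \<Rightarrow> real \<Rightarrow> real" where
  "psiI c d e x = Rf ((x - (c + e)) / e) - Rf ((x - (d - e)) / e)"

lemma div_le_m1: "(e::real) > 0 \<Longrightarrow> a \<le> - e \<Longrightarrow> a / e \<le> -1"
  by (simp add: divide_le_eq)

lemma div_ge_1: "(e::real) > 0 \<Longrightarrow> a \<ge> e \<Longrightarrow> a / e \<ge> 1"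
  by (simp add: le_divide_eq)

lemma rho_zero': "t \<le> -1 \<or> t \<ge> 1 \<Longrightarrow> rho t = 0"
  by (rule rho_zero) auto

lemma psiI_out:
  assumes e: "e > 0" "4 * e \<le> d - c" and x: "x \<le> c \<or> x \<ge> d"
  shows "psiI c d e x = 0 \<and> rho ((x - (c + e)) / e) = 0 \<and> rho ((x - (d - e)) / e) = 0"
proof (cases "x \<le> c")
  case True
  then have 1: "(x - (c + e)) / e \<le> -1" "(x - (d - e)) / e \<le> -1"
    using e by (intro div_le_m1; linarith)+
  then show ?thesis
    by (auto simp: psiI_def Rf_low intro!: rho_zero')
next
  case False
  then have "x \<ge> d" using x by simp
  then have 1: "(x - (c + e)) / e \<ge> 1" "(x - (d - e)) / e \<ge> 1"
    using e by (intro div_ge_1; linarith)+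
  then show ?thesis
    by (auto simp: psiI_def Rf_high intro!: rho_zero')
qed

lemma psiI_bound:
  assumes "e > 0" "4 * e \<le> d - c"
  shows "\<bar>psiI c d e x\<bar> \<le> indicator {c..d} x"
proof (cases "x \<le> c \<or> x \<ge> d")
  case True
  then show ?thesis using psiI_out[OF assms True, THEN conjunct1] by simp
next
  case False
  have "(x - (d - e)) / e \<le> (x - (c + e)) / e"
    using assms by (intro divide_right_mono) auto
  then have "Rf ((x - (d - e)) / e) \<le> Rf ((x - (c + e)) / e)" by (rule Rf_mono)
  then show ?thesis using False Rf_bounds[of "(x - (c + e)) / e"] Rf_bounds[of "(x - (d - e)) / e"]
    by (auto simp: psiI_def indicator_def)
qed

lemma psiI_in:
  assumes "e > 0" "x - c \<ge> 2 * e" "d - x \<ge> 2 * e"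
  shows "psiI c d e x = 1"
proof -
  have "(x - (c + e)) / e \<ge> 1" "(x - (d - e)) / e \<le> -1"
    using assms by (intro div_ge_1 div_le_m1; linarith)+
  then show ?thesis by (simp add: psiI_def Rf_low Rf_high)
qed

lemma weak_interval_zero:
  assumes W: "weak_deriv \<phi> \<phi>'" and L: "L2 \<phi>'"
    and Z: "\<And>x. c < x \<Longrightarrow> x < d \<Longrightarrow> \<phi> x = 0" and cd: "c < d"
  shows "(LINT x|lborel. \<phi>' x * indicator {c<..<d} x) = 0"
proof -
  define e :: "nat \<Rightarrow> real" where "e n = (d - c) / (real n + 4)" for n
  have e_pos: "e n > 0" for n using cd by (simp add: e_def)
  have e_le: "4 * e n \<le> d - c" for n
    using cd by (auto simp: e_def field_simps intro: mult_right_mono)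
  have m: "\<phi>' \<in> borel_measurable lborel" using L by (simp add: L2_def)
  have cont_psi: "continuous_on UNIV (psiI c d (e n))" for n
    unfolding psiI_def[abs_def]
    by (intro smooth_cont smooth_minus smooth_scale smooth_Rf)
  have zero: "(LINT x|lborel. \<phi>' x * psiI c d (e n) x) = 0" for n
  proof -
    have T: "test_function (\<lambda>x. Rf ((x - (c + e n)) / e n) - Rf ((x - (d - e n)) / e n))"
      by (rule psi2_test[OF e_pos])
    have "(LINT x|lborel. \<phi> x * deriv (\<lambda>x. Rf ((x - (c + e n)) / e n) - Rf ((x - (d - e n)) / e n)) x)
          = - (LINT x|lborel. \<phi>' x * (Rf ((x - (c + e n)) / e n) - Rf ((x - (d - e n)) / e n)))"
      using W T unfolding weak_deriv_def by blast
    moreover have "(LINT x|lborel. \<phi> x * deriv (\<lambda>x. Rf ((x - (c + e n)) / e n) - Rf ((x - (d - e n)) / e n)) x) = 0"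
    proof -
      have "(\<lambda>x. \<phi> x * deriv (\<lambda>x. Rf ((x - (c + e n)) / e n) - Rf ((x - (d - e n)) / e n)) x) = (\<lambda>x. 0)"
      proof
        fix x show "\<phi> x * deriv (\<lambda>x. Rf ((x - (c + e n)) / e n) - Rf ((x - (d - e n)) / e n)) x = 0"
      proof (cases "x \<le> c \<or> x \<ge> d")
        case True
        then show ?thesis using psiI_out[OF e_pos e_le True] by (simp add: psi2_deriv)
      next
        case False then show ?thesis using Z[of x] by simp
      qed
      qed
      then show ?thesis by simp
    qed
    ultimately show ?thesis by (simp add: psiI_def)
  qed
  have "(\<lambda>n. LINT x|lborel. \<phi>' x * psiI c d (e n) x) \<longlonglongrightarrow> (LINT x|lborel. \<phi>' x * indicator {c<..<d} x)"
  proof (rule integral_dominated_convergence[where w="\<lambda>x. \<bar>\<phi>' x * indicator {c..d} x\<bar>"])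
    show "(\<lambda>x. \<phi>' x * indicator {c<..<d} x) \<in> borel_measurable lborel" using m by measurable
    show "(\<lambda>x. \<phi>' x * psiI c d (e n) x) \<in> borel_measurable lborel" for n
      using m cont_meas[OF cont_psi[of n]] by measurable
    show "integrable lborel (\<lambda>x. \<bar>\<phi>' x * indicator {c..d} x\<bar>)"
      by (intro integrable_abs L2_loc_integrable L)
    show "AE x in lborel. norm (\<phi>' x * psiI c d (e n) x) \<le> \<bar>\<phi>' x * indicator {c..d} x\<bar>" for n
    proof (intro AE_I2)
      fix x
      have "\<bar>\<phi>' x\<bar> * \<bar>psiI c d (e n) x\<bar> \<le> \<bar>\<phi>' x\<bar> * indicator {c..d} x"
        by (intro mult_left_mono psiI_bound e_pos e_le) auto
      then show "norm (\<phi>' x * psiI c d (e n) x) \<le> \<bar>\<phi>' x * indicator {c..d} x\<bar>"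
        by (simp add: abs_mult)
    qed
    show "AE x in lborel. (\<lambda>n. \<phi>' x * psiI c d (e n) x) \<longlonglongrightarrow> \<phi>' x * indicator {c<..<d} x"
    proof (intro AE_I2)
      fix x
      show "(\<lambda>n. \<phi>' x * psiI c d (e n) x) \<longlonglongrightarrow> \<phi>' x * indicator {c<..<d} x"
      proof (cases "x \<le> c \<or> x \<ge> d")
        case True
        then have "\<phi>' x * psiI c d (e n) x = \<phi>' x * indicator {c<..<d} x" for n
          using psiI_out[OF e_pos e_le True] True by auto
        then have "(\<lambda>n. \<phi>' x * psiI c d (e n) x) = (\<lambda>n. \<phi>' x * indicator {c<..<d} x)" by (rule ext)
        then show ?thesis by simp
      next
        case False
        define m where "m = min (x - c) (d - x)"
        have mpos: "m > 0" using False by (simp add: m_def)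
        obtain N :: nat where N: "real N \<ge> 2 * (d - c) / m" using real_arch_simple by blast
        have "\<forall>n\<ge>N. \<phi>' x * psiI c d (e n) x = \<phi>' x * indicator {c<..<d} x"
        proof (intro allI impI)
          fix n assume "n \<ge> N"
          then have "real n + 4 \<ge> 2 * (d - c) / m" using N by linarith
          then have "(real n + 4) * m \<ge> 2 * (d - c)" using mpos by (simp add: field_simps)
          then have "2 * e n \<le> m" using mpos cd by (simp add: e_def field_simps)
          then have "psiI c d (e n) x = 1"
            by (intro psiI_in e_pos) (auto simp: m_def)
          then show "\<phi>' x * psiI c d (e n) x = \<phi>' x * indicator {c<..<d} x"
            using False by simp
        qed
        then show ?thesis
          by (intro tendsto_eventually) (auto simp: eventually_sequentially)
      qed
    qed
  qed
  then show ?thesis using zero by (simp add: LIMSEQ_const_iff)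
qed



lemma emeasure_density_real:
  fixes h :: "real \<Rightarrow> real"
  assumes h: "integrable lborel h" "\<And>x. h x \<ge> 0" and A: "A \<in> sets borel"
  shows "emeasure (density lborel (\<lambda>x. ennreal (h x))) A = ennreal (LINT x|lborel. h x * indicator A x)"
proof -
  have hm: "h \<in> borel_measurable lborel" using h(1) by (rule borel_measurable_integrable)
  have "emeasure (density lborel (\<lambda>x. ennreal (h x))) A = (\<integral>\<^sup>+ x. ennreal (h x) * indicator A x \<partial>lborel)"
    using hm A by (intro emeasure_density) auto
  also have "\<dots> = (\<integral>\<^sup>+ x. ennreal (h x * indicator A x) \<partial>lborel)"
    by (intro nn_integral_cong) (auto simp: indicator_def)
  also have "\<dots> = ennreal (LINT x|lborel. h x * indicator A x)"
    using h A by (intro nn_integral_eq_integral integrable_real_mult_indicator) (auto simp: indicator_def)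
  finally show ?thesis .
qed

lemma AE_zero_from_intervals:
  fixes f :: "real \<Rightarrow> real"
  assumes f: "integrable lborel f" and I: "\<And>t. (LINT x|lborel. f x * indicator {t<..} x) = 0"
  shows "AE x in lborel. f x = 0"
proof -
  define fp where "fp x = max (f x) 0" for x
  define fm where "fm x = max (- f x) 0" for x
  have ifp: "integrable lborel fp" unfolding fp_def using f by auto
  have ifm: "integrable lborel fm" unfolding fm_def using f by auto
  have mfp: "fp \<in> borel_measurable lborel" using ifp by (rule borel_measurable_integrable)
  have mfm: "fm \<in> borel_measurable lborel" using ifm by (rule borel_measurable_integrable)
  have eq: "(LINT x|lborel. fp x * indicator {t<..} x) = (LINT x|lborel. fm x * indicator {t<..} x)" for t
  proof -
    have i1: "integrable lborel (\<lambda>x. fp x * indicator {t<..} x)"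
      using ifp by (intro integrable_real_mult_indicator) auto
    have i2: "integrable lborel (\<lambda>x. fm x * indicator {t<..} x)"
      using ifm by (intro integrable_real_mult_indicator) auto
    have "(LINT x|lborel. fp x * indicator {t<..} x) - (LINT x|lborel. fm x * indicator {t<..} x)
        = (LINT x|lborel. fp x * indicator {t<..} x - fm x * indicator {t<..} x)"
      by (rule Bochner_Integration.integral_diff[OF i1 i2, symmetric])
    also have "(\<lambda>x. fp x * indicator {t<..} x - fm x * indicator {t<..} x) = (\<lambda>x. f x * indicator {t<..} x)"
      by (auto simp: fp_def fm_def fun_eq_iff indicator_def max_def)
    finally show ?thesis using I[of t] by simp
  qed
  have "density lborel (\<lambda>x. ennreal (fp x)) = density lborel (\<lambda>x. ennreal (fm x))"
  proof (rule measure_eqI_lessThan)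
    show "sets (density lborel (\<lambda>x. ennreal (fp x))) = sets borel" by simp
    show "sets (density lborel (\<lambda>x. ennreal (fm x))) = sets borel" by simp
    fix t
    show "emeasure (density lborel (\<lambda>x. ennreal (fp x))) {t<..} < \<infinity>"
      using emeasure_density_real[OF ifp _, of "{t<..}"] by (simp add: fp_def)
    show "emeasure (density lborel (\<lambda>x. ennreal (fp x))) {t<..} = emeasure (density lborel (\<lambda>x. ennreal (fm x))) {t<..}"
      using emeasure_density_real[OF ifp _, of "{t<..}"] emeasure_density_real[OF ifm _, of "{t<..}"] eq[of t]
      by (simp add: fp_def fm_def)
  qed
  then have "AE x in lborel. ennreal (fp x) = ennreal (fm x)"
    using mfp mfm by (intro sigma_finite_measure.density_unique[OF sigma_finite_lborel]) auto
  then show ?thesis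
  proof (rule AE_mp, intro AE_I2 impI)
    fix x assume "ennreal (fp x) = ennreal (fm x)"
    then have "fp x = fm x" by (simp add: fp_def fm_def)
    then show "f x = 0" by (auto simp: fp_def fm_def max_def split: if_splits)
  qed
qed

lemma weak_deriv_local_zero:
  assumes W: "weak_deriv \<phi> \<phi>'" and L: "L2 \<phi>'"
    and Z: "\<And>x. a < x \<Longrightarrow> x < b \<Longrightarrow> \<phi> x = 0" and ab: "a < b"
  shows "AE x in lborel. a < x \<and> x < b \<longrightarrow> \<phi>' x = 0"
proof -
  define f where "f x = \<phi>' x * indicator {a<..<b} x" for x
  have m: "\<phi>' \<in> borel_measurable lborel" using L by (simp add: L2_def)
  have fi: "integrable lborel f"
  proof -
    have "integrable lborel (\<lambda>x. (\<phi>' x * indicator {a..b} x) * indicator {a<..<b} x)"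
      by (rule integrable_real_mult_indicator[OF _ L2_loc_integrable[OF L, of a b]]) auto
    moreover have "(\<lambda>x. (\<phi>' x * indicator {a..b} x) * indicator {a<..<b} x) = f"
      by (auto simp: f_def fun_eq_iff indicator_def)
    ultimately show ?thesis by simp
  qed
  have "AE x in lborel. f x = 0"
  proof (rule AE_zero_from_intervals[OF fi])
    fix t
    show "(LINT x|lborel. f x * indicator {t<..} x) = 0"
    proof (cases "t \<le> a")
      case True
      then have "(\<lambda>x. f x * indicator {t<..} x) = (\<lambda>x. \<phi>' x * indicator {a<..<b} x)"
        by (auto simp: f_def fun_eq_iff indicator_def)
      then show ?thesis using weak_interval_zero[OF W L _ ab] Z by simp
    next
      case False
      show ?thesis
      proof (cases "t < b")
        case True
        then have "(\<lambda>x. f x * indicator {t<..} x) = (\<lambda>x. \<phi>' x * indicator {t<..<b} x)"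
          using False by (auto simp: f_def fun_eq_iff indicator_def)
        then show ?thesis using weak_interval_zero[OF W L _ True] Z False by simp
      next
        case False
        then have "(\<lambda>x. f x * indicator {t<..} x) = (\<lambda>x. 0)"
          by (auto simp: f_def fun_eq_iff indicator_def)
        then show ?thesis by simp
      qed
    qed
  qed
  then show ?thesis
    by (rule AE_mp) (auto simp: f_def indicator_def)
qed



lemma ftc_real:
  assumes "a \<le> b" "\<And>x. (F has_real_derivative f x) (at x)"
  shows "integral {a..b} f = F b - F a"
proof -
  have "(f has_integral (F b - F a)) {a..b}"
  proof (rule fundamental_theorem_of_calculus[OF assms(1)])
    fix x show "(F has_vector_derivative f x) (at x within {a..b})"
      using assms(2)[of x] by (simp add: has_real_derivative_iff_has_vector_derivative has_vector_derivative_at_within)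
  qed
  then show ?thesis by (rule integral_unique)
qed

lemma pker_cont: "continuous_on UNIV (\<lambda>x. pker (x - y))"
  unfolding pker_def by (intro continuous_intros) auto

lemma kernel_ibp:
  assumes d1: "\<And>x. (\<theta> has_real_derivative \<theta>1 x) (at x)"
    and d2: "\<And>x. (\<theta>1 has_real_derivative \<theta>2 x) (at x)"
    and c2: "continuous_on UNIV \<theta>2"
    and s: "\<And>x. \<bar>x\<bar> > M \<Longrightarrow> \<theta> x = 0 \<and> \<theta>1 x = 0 \<and> \<theta>2 x = 0"
  shows "(LINT x|lborel. pker (x - y) * (\<theta> x - \<theta>2 x)) = \<theta> y"
proof -
  define R where "R = max M \<bar>y\<bar> + 1"
  have c0: "continuous_on UNIV \<theta>"
    using d1 by (meson DERIV_isCont continuous_at_imp_continuous_on)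
  have cf: "continuous_on UNIV (\<lambda>x. pker (x - y) * (\<theta> x - \<theta>2 x))"
    by (intro continuous_intros pker_cont c0 c2)
  have sR: "\<theta> x = 0 \<and> \<theta>1 x = 0 \<and> \<theta>2 x = 0" if "\<bar>x\<bar> \<ge> R" for x
    using that by (intro s) (auto simp: R_def)
  have "(LINT x|lborel. pker (x - y) * (\<theta> x - \<theta>2 x)) = integral {-R..R} (\<lambda>x. pker (x - y) * (\<theta> x - \<theta>2 x))"
    by (rule integrable_cont_supp(2)[OF cf]) (use sR in auto)
  also have "\<dots> = integral {-R..y} (\<lambda>x. pker (x - y) * (\<theta> x - \<theta>2 x)) + integral {y..R} (\<lambda>x. pker (x - y) * (\<theta> x - \<theta>2 x))"
  proof -
    have "(\<lambda>x. pker (x - y) * (\<theta> x - \<theta>2 x)) integrable_on {-R..R}"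
      by (intro integrable_continuous_real continuous_on_subset[OF cf]) auto
    moreover have "-R \<le> y" "y \<le> R" by (auto simp: R_def)
    ultimately show ?thesis using Henstock_Kurzweil_Integration.integral_combine[where a="-R" and c=y and b=R and f="\<lambda>x. pker (x - y) * (\<theta> x - \<theta>2 x)"] by simp
  qed
  also have "integral {-R..y} (\<lambda>x. pker (x - y) * (\<theta> x - \<theta>2 x)) = integral {-R..y} (\<lambda>x. exp (x - y) / 2 * (\<theta> x - \<theta>2 x))"
    by (rule integral_cong) (auto simp: pker_def)
  also have "\<dots> = exp (y - y) / 2 * (\<theta> y - \<theta>1 y) - exp (-R - y) / 2 * (\<theta> (-R) - \<theta>1 (-R))"
  proof (rule ftc_real)
    show "-R \<le> y" by (auto simp: R_def)
    fix x
    show "((\<lambda>x. exp (x - y) / 2 * (\<theta> x - \<theta>1 x)) has_real_derivative exp (x - y) / 2 * (\<theta> x - \<theta>2 x)) (at x)"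
      using d1[of x] d2[of x] by (auto intro!: derivative_eq_intros simp: field_simps)
  qed
  also have "integral {y..R} (\<lambda>x. pker (x - y) * (\<theta> x - \<theta>2 x)) = integral {y..R} (\<lambda>x. exp (y - x) / 2 * (\<theta> x - \<theta>2 x))"
    by (rule integral_cong) (auto simp: pker_def)
  also have "\<dots> = (- exp (y - R) / 2 * (\<theta> R + \<theta>1 R)) - (- exp (y - y) / 2 * (\<theta> y + \<theta>1 y))"
  proof (rule ftc_real)
    show "y \<le> R" by (auto simp: R_def)
    fix x
    show "((\<lambda>x. - exp (y - x) / 2 * (\<theta> x + \<theta>1 x)) has_real_derivative exp (y - x) / 2 * (\<theta> x - \<theta>2 x)) (at x)"
      using d1[of x] d2[of x] by (auto intro!: derivative_eq_intros simp: field_simps)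
  qed
  finally have "(LINT x|lborel. pker (x - y) * (\<theta> x - \<theta>2 x)) = exp (y - y) / 2 * (\<theta> y - \<theta>1 y) - exp (-R - y) / 2 * (\<theta> (-R) - \<theta>1 (-R)) + ((- exp (y - R) / 2 * (\<theta> R + \<theta>1 R)) - (- exp (y - y) / 2 * (\<theta> y + \<theta>1 y)))" .
  moreover have "\<theta> R = 0" "\<theta>1 R = 0" "\<theta> (-R) = 0" "\<theta>1 (-R) = 0" using sR[of R] sR[of "-R"] by (auto simp: R_def)
  ultimately show ?thesis by (simp add: field_simps)
qed



lemma pker_bound: "pker (x - y) \<le> exp \<bar>x\<bar> * exp (- \<bar>y\<bar>) / 2"
proof -
  have "- \<bar>x - y\<bar> \<le> \<bar>x\<bar> + - \<bar>y\<bar>" by linarith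
  then have "exp (- \<bar>x - y\<bar>) \<le> exp (\<bar>x\<bar> + - \<bar>y\<bar>)" by (simp only: exp_le_cancel_iff)
  also have "exp (\<bar>x\<bar> + - \<bar>y\<bar>) = exp \<bar>x\<bar> * exp (- \<bar>y\<bar>)" by (rule exp_add)
  finally show ?thesis by (simp add: pker_def)
qed

lemma pker_nonneg: "pker x \<ge> 0" by (simp add: pker_def)

lemma conv_swap:
  fixes g \<theta> \<theta>1 \<theta>2 :: "real \<Rightarrow> real"
  assumes gm: "g \<in> borel_measurable lborel" and gi: "integrable lborel (\<lambda>y. g y * exp (- \<bar>y\<bar>))"
    and d1: "\<And>x. (\<theta> has_real_derivative \<theta>1 x) (at x)"
    and d2: "\<And>x. (\<theta>1 has_real_derivative \<theta>2 x) (at x)"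
    and c2: "continuous_on UNIV \<theta>2"
    and s: "\<And>x. \<bar>x\<bar> > M \<Longrightarrow> \<theta> x = 0 \<and> \<theta>1 x = 0 \<and> \<theta>2 x = 0"
  shows "(LINT x|lborel. pconv g x * (\<theta> x - \<theta>2 x)) = (LINT y|lborel. g y * \<theta> y)"
proof -
  define chi where "chi x = \<theta> x - \<theta>2 x" for x
  have c0: "continuous_on UNIV \<theta>"
    using d1 by (meson DERIV_isCont continuous_at_imp_continuous_on)
  have cchi: "continuous_on UNIV chi" unfolding chi_def[abs_def] by (intro continuous_intros c0 c2)
  have "compact (chi ` {-M..M})"
    by (intro compact_continuous_image continuous_on_subset[OF cchi]) auto
  then obtain B where B: "\<And>z. z \<in> chi ` {-M..M} \<Longrightarrow> \<bar>z\<bar> \<le> B"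
    using compact_imp_bounded bounded_iff by (metis real_norm_def)
  have chiB: "\<bar>chi x\<bar> \<le> B * indicator {-M..M} x" for x
  proof (cases "x \<in> {-M..M}")
    case True then show ?thesis using B[of "chi x"] by auto
  next
    case False then show ?thesis using s[of x] by (auto simp: chi_def)
  qed
  have chim[measurable]: "chi \<in> borel_measurable borel" by (rule borel_measurable_continuous_onI[OF cchi])
  have pkm[measurable]: "pker \<in> borel_measurable borel"
    unfolding pker_def[abs_def] by (intro borel_measurable_continuous_onI continuous_intros) auto
  have gm'[measurable]: "g \<in> borel_measurable borel" using gm by simp
  define F where "F p = chi (fst p) * (pker (fst p - snd p) * g (snd p))" for p
  have Fm: "F \<in> borel_measurable (lborel \<Otimes>\<^sub>M lborel)" unfolding F_def[abs_def] by measurable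
  define u where "u x = B * exp M / 2 * indicator {-M..M} x" for x :: real
  define v where "v y = \<bar>g y * exp (- \<bar>y\<bar>)\<bar>" for y
  have ui: "integrable lborel u" unfolding u_def
    by (rule borel_integrable_atLeastAtMost) auto
  have vi: "integrable lborel v" unfolding v_def using gi by (rule integrable_abs)
  have uvi: "integrable (lborel \<Otimes>\<^sub>M lborel) (\<lambda>p. u (fst p) * v (snd p))"
  proof (rule lborel_pair.Fubini_integrable)
    show "(\<lambda>p. u (fst p) * v (snd p)) \<in> borel_measurable (lborel \<Otimes>\<^sub>M lborel)"
      using borel_measurable_integrable[OF ui] borel_measurable_integrable[OF vi] by measurable
    have "(\<lambda>x. LINT y|lborel. norm (u (fst (x, y)) * v (snd (x, y)))) = (\<lambda>x. \<bar>u x\<bar> * (LINT y|lborel. \<bar>v y\<bar>))"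
      by (simp add: abs_mult)
    then show "integrable lborel (\<lambda>x. LINT y|lborel. norm (u (fst (x, y)) * v (snd (x, y))))"
      using ui by (simp add: integrable_abs)
    show "AE x in lborel. integrable lborel (\<lambda>y. u (fst (x, y)) * v (snd (x, y)))"
      using vi by simp
  qed
  have Fi: "integrable (lborel \<Otimes>\<^sub>M lborel) F"
  proof (rule Bochner_Integration.integrable_bound[OF uvi Fm], intro AE_I2)
    fix p :: "real \<times> real"
    obtain x y where p: "p = (x, y)" by (cases p)
    have "\<bar>F p\<bar> \<le> u x * v y"
    proof (cases "x \<in> {-M..M}")
      case False
      then have "chi x = 0" using s[of x] by (auto simp: chi_def)
      moreover have "u x * v y \<ge> 0" using False by (simp add: u_def v_def)
      ultimately show ?thesis by (simp add: F_def p)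
    next
      case True
      have c: "\<bar>chi x\<bar> \<le> B" using chiB[of x] True by simp
      have "pker (x - y) \<le> exp \<bar>x\<bar> * exp (- \<bar>y\<bar>) / 2" by (rule pker_bound)
      also have "\<dots> \<le> exp M * exp (- \<bar>y\<bar>) / 2" using True by (auto intro: divide_right_mono mult_right_mono)
      finally have pk: "pker (x - y) \<le> exp M * exp (- \<bar>y\<bar>) / 2" .
      have "\<bar>F p\<bar> = \<bar>chi x\<bar> * (pker (x - y) * \<bar>g y\<bar>)"
        by (simp add: F_def p abs_mult pker_nonneg)
      also have "\<dots> \<le> B * ((exp M * exp (- \<bar>y\<bar>) / 2) * \<bar>g y\<bar>)"
        using c by (intro mult_mono c mult_right_mono pk) (auto simp: pker_nonneg)
      also have "\<dots> = u x * v y" using True by (simp add: u_def v_def abs_mult)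
      finally show ?thesis .
    qed
    then show "norm (F p) \<le> norm (u (fst p) * v (snd p))" by (simp add: p)
  qed
  have lhs: "pconv g x * chi x = (LINT y|lborel. F (x, y))" for x
    by (simp add: pconv_def F_def mult.commute)
  have rhs: "(LINT x|lborel. F (x, y)) = g y * \<theta> y" for y
  proof -
    have "(LINT x|lborel. F (x, y)) = (LINT x|lborel. (pker (x - y) * (\<theta> x - \<theta>2 x)) * g y)"
      by (simp add: F_def chi_def mult_ac)
    also have "\<dots> = (LINT x|lborel. pker (x - y) * (\<theta> x - \<theta>2 x)) * g y" by simp
    also have "\<dots> = \<theta> y * g y" using kernel_ibp[OF d1 d2 c2 s] by simp
    finally show ?thesis by simp
  qed
  have "(LINT x|lborel. pconv g x * (\<theta> x - \<theta>2 x)) = (LINT x|lborel. LINT y|lborel. F (x, y))"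
    using lhs by (simp add: chi_def)
  also have "\<dots> = (LINT y|lborel. LINT x|lborel. F (x, y))"
    using lborel_pair.Fubini_integral[of "\<lambda>x y. F (x, y)"] Fi by simp
  also have "\<dots> = (LINT y|lborel. g y * \<theta> y)" using rhs by simp
  finally show ?thesis .
qed



lemma exp_abs_integrable: "integrable lborel (\<lambda>y::real. exp (- \<bar>y\<bar>))"
proof -
  define f1 where "f1 y = exp (- y) * indicator {0..} y" for y :: real
  have m1: "f1 \<in> borel_measurable lborel" unfolding f1_def by measurable
  have "(\<integral>\<^sup>+ y. ennreal (f1 y) \<partial>lborel) = (\<integral>\<^sup>+x. ennreal (x^0 * exp (-x)) * indicator {0 ..} x \<partial>lborel)"
    by (intro nn_integral_cong) (auto simp: f1_def indicator_def)
  also have "\<dots> = 1" using nn_intergal_power_times_exp_Ici[of 0] by simp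
  finally have i1: "integrable lborel f1"
    using m1 by (intro integrableI_nonneg) (auto simp: f1_def)
  have i2: "integrable lborel (\<lambda>y. f1 (0 + (-1) * y))"
    by (rule lborel_integrable_real_affine[OF i1]) simp
  have "integrable lborel (\<lambda>y. f1 y + f1 (0 + (-1) * y))"
    using i1 i2 by (rule Bochner_Integration.integrable_add)
  then show ?thesis
  proof (rule Bochner_Integration.integrable_bound)
    show "(\<lambda>y::real. exp (- \<bar>y\<bar>)) \<in> borel_measurable lborel" by measurable
    show "AE x in lborel. norm (exp (- \<bar>x\<bar>)) \<le> norm (f1 x + f1 (0 + - 1 * x))"
      by (intro AE_I2) (auto simp: f1_def indicator_def)
  qed
qed

lemma half_le: "0 \<le> (p::real) \<Longrightarrow> X \<le> Y \<Longrightarrow> 0 \<le> Y \<Longrightarrow> p / 2 * X \<le> p * Y"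
proof -
  assume a: "0 \<le> p" "X \<le> Y" "0 \<le> Y"
  have "p / 2 * X \<le> p / 2 * Y" using a by (intro mult_left_mono) auto
  also have "\<dots> \<le> p * Y" using a by (intro mult_right_mono) auto
  finally show ?thesis .
qed

lemma g_weighted_integrable:
  fixes \<phi> \<phi>' \<eta> :: "real \<Rightarrow> real"
  assumes L: "L2 \<phi>" "L2 \<phi>'" "L2 \<eta>" and A: "A > 0"
  shows "integrable lborel (\<lambda>y. (- A * \<phi> y + (3 - \<sigma>) / 2 * (\<phi> y)\<^sup>2 + \<sigma> / 2 * (\<phi>' y)\<^sup>2
                        + 1 / 2 * (1 + \<eta> y)\<^sup>2) * exp (- \<bar>y\<bar>))"
proof -
  have m[measurable]: "\<phi> \<in> borel_measurable borel" "\<phi>' \<in> borel_measurable borel" "\<eta> \<in> borel_measurable borel"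
    using L by (auto simp: L2_def)
  have i: "integrable lborel (\<lambda>y. (\<phi> y)\<^sup>2)" "integrable lborel (\<lambda>y. (\<phi>' y)\<^sup>2)" "integrable lborel (\<lambda>y. (\<eta> y)\<^sup>2)"
    using L by (auto simp: L2_def)
  define W where "W y = A * ((\<phi> y)\<^sup>2 + exp (- \<bar>y\<bar>)) + \<bar>3 - \<sigma>\<bar> * (\<phi> y)\<^sup>2 + \<bar>\<sigma>\<bar> * (\<phi>' y)\<^sup>2 + exp (- \<bar>y\<bar>) + (\<eta> y)\<^sup>2" for y
  have Wi: "integrable lborel W"
    unfolding W_def using i exp_abs_integrable by (intro Bochner_Integration.integrable_add integrable_mult_right) auto
  show ?thesis
  proof (rule Bochner_Integration.integrable_bound[OF Wi], measurable, intro AE_I2)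
    fix y :: real
    define e where "e = exp (- \<bar>y\<bar>)"
    have e0: "0 < e" and e1: "e \<le> 1" by (auto simp: e_def)
    have f1: "\<bar>\<phi> y\<bar> * e \<le> (\<phi> y)\<^sup>2 + e"
    proof (cases "\<bar>\<phi> y\<bar> \<le> 1")
      case True
      then have "\<bar>\<phi> y\<bar> * e \<le> 1 * e" using e0 by (intro mult_right_mono) auto
      moreover have "0 \<le> (\<phi> y)\<^sup>2" by simp
      ultimately show ?thesis by linarith
    next
      case False
      then have "\<bar>\<phi> y\<bar> * e \<le> \<bar>\<phi> y\<bar> * 1" using e1 by (intro mult_left_mono) auto
      also have "\<dots> \<le> \<bar>\<phi> y\<bar> * \<bar>\<phi> y\<bar>" using False by (intro mult_left_mono) auto
      finally show ?thesis using e0 by (simp add: power2_eq_square)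
    qed
    have f2: "(\<phi> y)\<^sup>2 * e \<le> (\<phi> y)\<^sup>2" "(\<phi>' y)\<^sup>2 * e \<le> (\<phi>' y)\<^sup>2" "(\<eta> y)\<^sup>2 * e \<le> (\<eta> y)\<^sup>2"
      using e1 by (auto intro: mult_left_le)
    have f3: "(1 + \<eta> y)\<^sup>2 \<le> 2 + 2 * (\<eta> y)\<^sup>2"
    proof -
      have "0 \<le> (1 - \<eta> y)\<^sup>2" by simp
      then show ?thesis by (simp add: power2_eq_square algebra_simps)
    qed
    have "\<bar>(- A * \<phi> y + (3 - \<sigma>) / 2 * (\<phi> y)\<^sup>2 + \<sigma> / 2 * (\<phi>' y)\<^sup>2 + 1 / 2 * (1 + \<eta> y)\<^sup>2) * e\<bar>
       \<le> (A * \<bar>\<phi> y\<bar> + \<bar>3 - \<sigma>\<bar> / 2 * (\<phi> y)\<^sup>2 + \<bar>\<sigma>\<bar> / 2 * (\<phi>' y)\<^sup>2 + 1 / 2 * (1 + \<eta> y)\<^sup>2) * e"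
    proof -
      have "\<bar>- A * \<phi> y + (3 - \<sigma>) / 2 * (\<phi> y)\<^sup>2 + \<sigma> / 2 * (\<phi>' y)\<^sup>2 + 1 / 2 * (1 + \<eta> y)\<^sup>2\<bar>
         \<le> A * \<bar>\<phi> y\<bar> + \<bar>3 - \<sigma>\<bar> / 2 * (\<phi> y)\<^sup>2 + \<bar>\<sigma>\<bar> / 2 * (\<phi>' y)\<^sup>2 + 1 / 2 * (1 + \<eta> y)\<^sup>2"
      proof -
        have t: "\<bar>a + b + c + d\<bar> \<le> \<bar>a\<bar> + \<bar>b\<bar> + \<bar>c\<bar> + \<bar>d\<bar>" for a b c d :: real by arith
        have "\<bar>- A * \<phi> y\<bar> = A * \<bar>\<phi> y\<bar>" "\<bar>(3 - \<sigma>) / 2 * (\<phi> y)\<^sup>2\<bar> = \<bar>3 - \<sigma>\<bar> / 2 * (\<phi> y)\<^sup>2"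
             "\<bar>\<sigma> / 2 * (\<phi>' y)\<^sup>2\<bar> = \<bar>\<sigma>\<bar> / 2 * (\<phi>' y)\<^sup>2" "\<bar>1 / 2 * (1 + \<eta> y)\<^sup>2\<bar> = 1 / 2 * (1 + \<eta> y)\<^sup>2"
          using A by (auto simp: abs_mult)
        then show ?thesis using t[of "- A * \<phi> y" "(3 - \<sigma>) / 2 * (\<phi> y)\<^sup>2" "\<sigma> / 2 * (\<phi>' y)\<^sup>2" "1 / 2 * (1 + \<eta> y)\<^sup>2"] by linarith
      qed
      then show ?thesis using e0 by (simp add: abs_mult mult_right_mono)
    qed
    also have "\<dots> = A * (\<bar>\<phi> y\<bar> * e) + \<bar>3 - \<sigma>\<bar> / 2 * ((\<phi> y)\<^sup>2 * e) + \<bar>\<sigma>\<bar> / 2 * ((\<phi>' y)\<^sup>2 * e) + 1 / 2 * ((1 + \<eta> y)\<^sup>2 * e)"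
      by (simp add: algebra_simps)
    also have "\<dots> \<le> A * ((\<phi> y)\<^sup>2 + e) + \<bar>3 - \<sigma>\<bar> * (\<phi> y)\<^sup>2 + \<bar>\<sigma>\<bar> * (\<phi>' y)\<^sup>2 + (e + (\<eta> y)\<^sup>2)"
    proof -
      have a: "A * (\<bar>\<phi> y\<bar> * e) \<le> A * ((\<phi> y)\<^sup>2 + e)" using A f1 by (intro mult_left_mono) auto
      have b: "\<bar>3 - \<sigma>\<bar> / 2 * ((\<phi> y)\<^sup>2 * e) \<le> \<bar>3 - \<sigma>\<bar> * (\<phi> y)\<^sup>2"
        using f2(1) by (intro half_le) auto
      have c: "\<bar>\<sigma>\<bar> / 2 * ((\<phi>' y)\<^sup>2 * e) \<le> \<bar>\<sigma>\<bar> * (\<phi>' y)\<^sup>2"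
        using f2(2) by (intro half_le) auto
      have d: "1 / 2 * ((1 + \<eta> y)\<^sup>2 * e) \<le> e + (\<eta> y)\<^sup>2"
      proof -
        have "(1 + \<eta> y)\<^sup>2 * e \<le> (2 + 2 * (\<eta> y)\<^sup>2) * e" using f3 e0 by (intro mult_right_mono) auto
        then show ?thesis using f2(3) by (simp add: algebra_simps)
      qed
      show ?thesis using a b c d by linarith
    qed
    also have "\<dots> = W y" by (simp add: W_def e_def)
    finally have H: "\<bar>(- A * \<phi> y + (3 - \<sigma>) / 2 * (\<phi> y)\<^sup>2 + \<sigma> / 2 * (\<phi>' y)\<^sup>2 + 1 / 2 * (1 + \<eta> y)\<^sup>2) * e\<bar> \<le> W y" .
    have Wnn: "0 \<le> W y" unfolding W_def using A by (intro add_nonneg_nonneg mult_nonneg_nonneg) auto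
    have n1: "norm ((- A * \<phi> y + (3 - \<sigma>) / 2 * (\<phi> y)\<^sup>2 + \<sigma> / 2 * (\<phi>' y)\<^sup>2 + 1 / 2 * (1 + \<eta> y)\<^sup>2) * exp (- \<bar>y\<bar>))
       = \<bar>(- A * \<phi> y + (3 - \<sigma>) / 2 * (\<phi> y)\<^sup>2 + \<sigma> / 2 * (\<phi>' y)\<^sup>2 + 1 / 2 * (1 + \<eta> y)\<^sup>2) * e\<bar>"
      by (simp only: real_norm_def e_def)
    have n2: "norm (W y) = W y" using Wnn by simp
    show "norm ((- A * \<phi> y + (3 - \<sigma>) / 2 * (\<phi> y)\<^sup>2 + \<sigma> / 2 * (\<phi>' y)\<^sup>2 + 1 / 2 * (1 + \<eta> y)\<^sup>2) * exp (- \<bar>y\<bar>)) \<le> norm (W y)"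
      unfolding n1 n2 by (rule H)
  qed
qed



lemma smooth_div: "smooth f \<Longrightarrow> smooth (\<lambda>x. f x / c)"
  using smooth_cmult[of f "1/c"] by simp

lemma abs_div_gt1: "e > 0 \<Longrightarrow> \<bar>x - a\<bar> > e \<Longrightarrow> \<bar>(x - a) / e\<bar> > (1::real)"
  by (simp add: abs_divide less_divide_eq)

lemma rho_d_zero:
  assumes "e > 0" "\<bar>x - a\<bar> > e"
  shows "rho ((x - a) / e) = 0" "deriv rho ((x - a) / e) = 0" "deriv (deriv rho) ((x - a) / e) = 0"
  using rho_iter_zero[OF abs_div_gt1[OF assms], of 0] rho_iter_zero[OF abs_div_gt1[OF assms], of 1]
    rho_iter_zero[OF abs_div_gt1[OF assms], of 2]
  by (simp_all add: numeral_2_eq_2)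

lemma smooth_r1: "smooth (deriv rho)" by (rule smooth_deriv[OF smooth_rho])
lemma smooth_r2: "smooth (deriv (deriv rho))" by (rule smooth_deriv[OF smooth_r1])

lemma claimK:
  fixes \<phi> \<phi>' \<eta> :: "real \<Rightarrow> real"
  assumes A: "A > 0" and H: "H1_with \<phi> \<phi>'" and L\<eta>: "L2 \<eta>"
    and c\<phi>: "continuous_on UNIV \<phi>" and c\<eta>: "continuous_on UNIV \<eta>"
    and E1: "dist_deriv_zero (\<lambda>x. - c * \<phi> x + \<sigma> / 2 * (\<phi> x)\<^sup>2
           + pconv (\<lambda>y. - A * \<phi> y + (3 - \<sigma>) / 2 * (\<phi> y)\<^sup>2 + \<sigma> / 2 * (\<phi>' y)\<^sup>2
                        + 1 / 2 * (1 + \<eta> y)\<^sup>2) x)"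
    and r: "r > 0" and Z1: "\<And>y. \<bar>y - x1\<bar> < r \<Longrightarrow> \<phi> y = 0" and Z2: "\<And>y. \<bar>y - x2\<bar> < r \<Longrightarrow> \<phi> y = 0"
  shows "(1 + \<eta> x1)\<^sup>2 = (1 + \<eta> x2)\<^sup>2"
proof -
  define g where "g y = - A * \<phi> y + (3 - \<sigma>) / 2 * (\<phi> y)\<^sup>2 + \<sigma> / 2 * (\<phi>' y)\<^sup>2 + 1 / 2 * (1 + \<eta> y)\<^sup>2" for y
  define h where "h y = 1 / 2 * (1 + \<eta> y)\<^sup>2" for y
  have L: "L2 \<phi>" "L2 \<phi>'" "weak_deriv \<phi> \<phi>'" using H by (auto simp: H1_with_def)
  have gm: "g \<in> borel_measurable lborel"
  proof -
    have [measurable]: "\<phi> \<in> borel_measurable borel" "\<phi>' \<in> borel_measurable borel" "\<eta> \<in> borel_measurable borel"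
      using L L\<eta> by (auto simp: L2_def)
    show ?thesis unfolding g_def by measurable
  qed
  have gi: "integrable lborel (\<lambda>y. g y * exp (- \<bar>y\<bar>))"
    unfolding g_def by (rule g_weighted_integrable[OF L(1,2) L\<eta> A])
  have ch: "continuous_on UNIV h" unfolding h_def by (intro continuous_intros c\<eta>)
  have hm: "h \<in> borel_measurable lborel" by (rule cont_meas[OF ch])
  have AE1: "AE y in lborel. x1 - r < y \<and> y < x1 + r \<longrightarrow> \<phi>' y = 0"
    by (rule weak_deriv_local_zero[OF L(3) L(2)]) (use Z1 r in auto)
  have AE2: "AE y in lborel. x2 - r < y \<and> y < x2 + r \<longrightarrow> \<phi>' y = 0"
    by (rule weak_deriv_local_zero[OF L(3) L(2)]) (use Z2 r in auto)
  have key: "(LINT x|lborel. h x * (rho ((x - x1) / e) / e)) - (LINT x|lborel. h x * (rho ((x - x2) / e) / e)) = 0"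
    if e: "0 < e" "e < r" for e
  proof -
    define r1 where "r1 = deriv rho"
    define r2 where "r2 = deriv (deriv rho)"
    define \<theta> where "\<theta> x = rho ((x - x1) / e) / e - rho ((x - x2) / e) / e" for x
    define \<theta>1 where "\<theta>1 x = r1 ((x - x1) / e) / e / e - r1 ((x - x2) / e) / e / e" for x
    define \<theta>2 where "\<theta>2 x = r2 ((x - x1) / e) / e / e / e - r2 ((x - x2) / e) / e / e / e" for x
    define ch where "ch x = Rf ((x - x1) / e) - Rf ((x - x2) / e) - \<theta>1 x" for x
    have dr: "(rho has_real_derivative r1 t) (at t)" "(r1 has_real_derivative r2 t) (at t)" for t
      unfolding r1_def r2_def by (intro smooth_deriv_has smooth_rho smooth_r1)+
    have sc: "((\<lambda>x. f ((x - a) / e) / e) has_real_derivative f' ((x - a) / e) / e / e) (at x)"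
      if "\<And>t. (f has_real_derivative f' t) (at t)" for f f' a x
      using DERIV_cdivide[OF deriv_scale[of f f' x a e, OF that], of e] by simp
    have d1: "(\<theta> has_real_derivative \<theta>1 x) (at x)" for x
      unfolding \<theta>_def[abs_def] \<theta>1_def by (intro DERIV_diff sc dr)
    have d2: "(\<theta>1 has_real_derivative \<theta>2 x) (at x)" for x
      unfolding \<theta>1_def[abs_def] \<theta>2_def by (intro DERIV_diff DERIV_cdivide sc dr)
    have dch: "(ch has_real_derivative \<theta> x - \<theta>2 x) (at x)" for x
      unfolding ch_def[abs_def] \<theta>_def
      by (intro DERIV_diff d2 deriv_scale Rf_deriv)
    have c2: "continuous_on UNIV \<theta>2"
      unfolding \<theta>2_def[abs_def] r2_def
      by (intro smooth_cont smooth_minus smooth_div smooth_scale smooth_r2)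
    have supp: "\<theta> x = 0 \<and> \<theta>1 x = 0 \<and> \<theta>2 x = 0" if "\<bar>x - x1\<bar> > e" "\<bar>x - x2\<bar> > e" for x
      using rho_d_zero[OF e(1) that(1)] rho_d_zero[OF e(1) that(2)]
      by (simp add: \<theta>_def \<theta>1_def \<theta>2_def r1_def r2_def)
    define M where "M = max \<bar>x1\<bar> \<bar>x2\<bar> + e"
    have s: "\<theta> x = 0 \<and> \<theta>1 x = 0 \<and> \<theta>2 x = 0" if "\<bar>x\<bar> > M" for x
      using that by (intro supp) (auto simp: M_def)
    have T: "test_function ch"
    proof (rule test_functionI)
      show "smooth ch" unfolding ch_def[abs_def] \<theta>1_def r1_def
        by (intro smooth_minus smooth_div smooth_scale smooth_Rf smooth_r1)
      have "{x. ch x \<noteq> 0} \<subseteq> {min x1 x2 - e .. max x1 x2 + e}"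
      proof (rule subsetI, rule ccontr)
        fix x assume x: "x \<in> {x. ch x \<noteq> 0}" "x \<notin> {min x1 x2 - e .. max x1 x2 + e}"
        have far: "\<bar>x - x1\<bar> > e" "\<bar>x - x2\<bar> > e" using x(2) by auto
        then have t1: "\<theta>1 x = 0" using supp by blast
        show False
        proof (cases "x < min x1 x2 - e")
          case True
          then have "(x - x1) / e \<le> -1" "(x - x2) / e \<le> -1" using e by (intro div_le_m1; linarith)+
          then show False using x(1) t1 by (simp add: ch_def Rf_low)
        next
          case False
          then have "x > max x1 x2 + e" using x(2) by auto
          then have "(x - x1) / e \<ge> 1" "(x - x2) / e \<ge> 1" using e by (intro div_ge_1; linarith)+
          then show False using x(1) t1 by (simp add: ch_def Rf_high)
        qed
      qed
      then show "bounded {x. ch x \<noteq> 0}"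
        by (rule bounded_subset[OF bounded_closed_interval])
    qed
    have dch': "deriv ch = (\<lambda>x. \<theta> x - \<theta>2 x)"
      using dch by (auto simp: fun_eq_iff intro: DERIV_imp_deriv)
    have "0 = (LINT x|lborel. (- c * \<phi> x + \<sigma> / 2 * (\<phi> x)\<^sup>2 + pconv g x) * deriv ch x)"
      using E1 T unfolding dist_deriv_zero_def g_def[abs_def] by simp
    also have "\<dots> = (LINT x|lborel. pconv g x * (\<theta> x - \<theta>2 x))"
    proof -
      have "(- c * \<phi> x + \<sigma> / 2 * (\<phi> x)\<^sup>2 + pconv g x) * deriv ch x = pconv g x * (\<theta> x - \<theta>2 x)" for x
      proof (cases "\<bar>x - x1\<bar> > e \<and> \<bar>x - x2\<bar> > e")
        case True then show ?thesis using supp[of x] by (simp add: dch')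
      next
        case False
        then have "\<phi> x = 0" using Z1[of x] Z2[of x] e by auto
        then show ?thesis by (simp add: dch')
      qed
      then show ?thesis by simp
    qed
    also have "\<dots> = (LINT y|lborel. g y * \<theta> y)"
      by (rule conv_swap[OF gm gi d1 d2 c2 s])
    also have "\<dots> = (LINT y|lborel. h y * \<theta> y)"
    proof (rule integral_cong_AE)
      have c\<theta>: "continuous_on UNIV \<theta>" unfolding \<theta>_def[abs_def]
        by (intro smooth_cont smooth_minus smooth_div smooth_scale smooth_rho)
      show "(\<lambda>y. g y * \<theta> y) \<in> borel_measurable lborel" using gm cont_meas[OF c\<theta>] by measurable
      show "(\<lambda>y. h y * \<theta> y) \<in> borel_measurable lborel" using hm cont_meas[OF c\<theta>] by measurable
      show "AE y in lborel. g y * \<theta> y = h y * \<theta> y"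
        using AE1 AE2
      proof eventually_elim
        case (elim y)
        show ?case
        proof (cases "\<bar>y - x1\<bar> > e \<and> \<bar>y - x2\<bar> > e")
          case True then show ?thesis using supp[of y] by simp
        next
          case False
          then have "\<bar>y - x1\<bar> < r \<or> \<bar>y - x2\<bar> < r" using e by auto
          then have "\<phi> y = 0 \<and> \<phi>' y = 0" using Z1[of y] Z2[of y] elim by auto
          then show ?thesis by (simp add: g_def h_def)
        qed
      qed
    qed
    also have "\<dots> = (LINT x|lborel. h x * (rho ((x - x1) / e) / e)) - (LINT x|lborel. h x * (rho ((x - x2) / e) / e))"
    proof -
      have "(LINT y|lborel. h y * \<theta> y) = (LINT x|lborel. h x * (rho ((x - x1) / e) / e) - h x * (rho ((x - x2) / e) / e))"
        by (simp add: \<theta>_def right_diff_distrib)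
      also have "\<dots> = (LINT x|lborel. h x * (rho ((x - x1) / e) / e)) - (LINT x|lborel. h x * (rho ((x - x2) / e) / e))"
        by (intro Bochner_Integration.integral_diff rho_scale_integrable e(1) ch)
      finally show ?thesis .
    qed
    finally show ?thesis by simp
  qed
  have lim: "((\<lambda>e. (LINT x|lborel. h x * (rho ((x - x1) / e) / e)) - (LINT x|lborel. h x * (rho ((x - x2) / e) / e))) \<longlongrightarrow> h x1 - h x2) (at_right 0)"
    by (intro tendsto_diff mollify_lim ch)
  have ev: "\<forall>\<^sub>F e in at_right 0. (LINT x|lborel. h x * (rho ((x - x1) / e) / e)) - (LINT x|lborel. h x * (rho ((x - x2) / e) / e)) = 0"
    unfolding eventually_at_right_field
    by (intro exI[of _ r] conjI allI impI key r) auto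
  have lim2: "((\<lambda>e. (LINT x|lborel. h x * (rho ((x - x1) / e) / e)) - (LINT x|lborel. h x * (rho ((x - x2) / e) / e))) \<longlongrightarrow> 0) (at_right 0)"
    by (rule tendsto_eventually[OF ev])
  have "h x1 - h x2 = 0" by (rule tendsto_unique[OF _ lim lim2]) simp
  then show ?thesis by (simp add: h_def)
qed



lemma two_val_const:
  fixes f :: "real \<Rightarrow> real"
  assumes "continuous_on UNIV f" "\<And>x. f x = a \<or> f x = b"
  shows "f x = f y"
proof -
  have c: "connected (f ` UNIV)" by (rule connected_continuous_image[OF assms(1) connected_UNIV])
  have "f ` UNIV \<subseteq> {a, b}" using assms(2) by auto
  then have "finite (f ` UNIV)" by (rule finite_subset) simp
  then obtain z where "f ` UNIV = {z}" using connected_finite_iff_sing[OF c] by auto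
  then show ?thesis by (metis UNIV_I image_eqI singletonD)
qed

lemma lim_inf_const:
  fixes f :: "real \<Rightarrow> real"
  assumes "(f \<longlongrightarrow> l) at_infinity" "\<And>x. f x = f y"
  shows "f y = l"
proof -
  have ev: "eventually (\<lambda>x. f x = f y) at_infinity" using assms(2) by simp
  have "((\<lambda>x::real. f y) \<longlongrightarrow> l) at_infinity"
    using tendsto_cong[OF ev] assms(1) by blast
  then show ?thesis
    using tendsto_unique[OF _ tendsto_const] trivial_limit_at_infinity by blast
qed

theorem proposition2p4:
  fixes A \<sigma> c :: real and \<phi> \<phi>' \<eta> :: "real \<Rightarrow> real"
  assumes "A > 0"
    and "H1_with \<phi> \<phi>'" and "H1 \<eta>"
    and "continuous_on UNIV \<phi>" and "continuous_on UNIV \<eta>"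
    and "\<exists>x. \<phi> x \<noteq> 0 \<or> \<eta> x \<noteq> 0"
    and "(\<phi> \<longlongrightarrow> 0) at_infinity" and "(\<eta> \<longlongrightarrow> 0) at_infinity"
    and "dist_deriv_zero (\<lambda>x. - c * \<phi> x + \<sigma> / 2 * (\<phi> x)\<^sup>2
           + pconv (\<lambda>y. - A * \<phi> y + (3 - \<sigma>) / 2 * (\<phi> y)\<^sup>2 + \<sigma> / 2 * (\<phi>' y)\<^sup>2
                        + 1 / 2 * (1 + \<eta> y)\<^sup>2) x)"
    and "dist_deriv_zero (\<lambda>x. - c * \<eta> x + (1 + \<eta> x) * \<phi> x)"
  shows "c \<noteq> 0 \<and> (\<forall>x. \<phi> x \<noteq> c)"
proof -
  note A = assms(1) and H = assms(2) and c\<phi> = assms(4) and c\<eta> = assms(5)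
    and NT = assms(6) and l\<phi> = assms(7) and l\<eta> = assms(8) and E1 = assms(9) and E2 = assms(10)
  have L\<eta>: "L2 \<eta>" using assms(3) by (auto simp: H1_def H1_with_def)
  define F2 where "F2 x = - c * \<eta> x + (1 + \<eta> x) * \<phi> x" for x
  have cF2: "continuous_on UNIV F2" unfolding F2_def[abs_def] by (intro continuous_intros c\<phi> c\<eta>)
  have constF2: "F2 x = F2 0" for x
    by (rule dist_deriv_zero_const[OF cF2]) (use E2 in \<open>simp add: F2_def[abs_def]\<close>)
  have "(F2 \<longlongrightarrow> - c * 0 + (1 + 0) * 0) at_infinity"
    unfolding F2_def[abs_def] by (intro tendsto_intros l\<phi> l\<eta>)
  then have "F2 0 = 0" using lim_inf_const[where f=F2 and y=0, OF _ constF2] by simp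
  then have F2z: "- c * \<eta> x + (1 + \<eta> x) * \<phi> x = 0" for x
    using constF2[of x] by (simp add: F2_def)
  have cnz: "c \<noteq> 0"
  proof
    assume c0: "c = 0"
    have P: "(1 + \<eta> x) * \<phi> x = 0" for x using F2z[of x] c0 by simp
    define q where "q x = (1 + \<eta> x)\<^sup>2" for x
    have cq: "continuous_on UNIV q" unfolding q_def[abs_def] by (intro continuous_intros c\<eta>)
    have bnd: "\<eta> x = -1" if "\<not> (\<exists>r>0. \<forall>y. \<bar>y - x\<bar> < r \<longrightarrow> \<phi> y = 0)" for x
    proof (rule ccontr)
      assume ne: "\<eta> x \<noteq> -1"
      have "isCont \<eta> x" using c\<eta> by (simp add: continuous_on_eq_continuous_at)
      then obtain r where r: "r > 0" "\<And>y. \<bar>y - x\<bar> < r \<Longrightarrow> \<bar>\<eta> y - \<eta> x\<bar> < \<bar>\<eta> x + 1\<bar>"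
      proof -
        have "\<bar>\<eta> x + 1\<bar> > 0" using ne by auto
        then show ?thesis using \<open>isCont \<eta> x\<close> that unfolding continuous_at_eps_delta dist_real_def by blast
      qed
      have "\<forall>y. \<bar>y - x\<bar> < r \<longrightarrow> \<phi> y = 0"
      proof (intro allI impI)
        fix y assume "\<bar>y - x\<bar> < r"
        then have "\<eta> y \<noteq> -1" using r(2)[of y] by auto
        then show "\<phi> y = 0" using P[of y] by simp
      qed
      then show False using that r(1) by blast
    qed
    obtain K where K: "\<And>x. q x = 0 \<or> q x = K"
    proof (cases "\<exists>x0 r0. r0 > 0 \<and> (\<forall>y. \<bar>y - x0\<bar> < r0 \<longrightarrow> \<phi> y = 0)")
      case True
      then obtain x0 r0 where x0: "r0 > 0" "\<And>y. \<bar>y - x0\<bar> < r0 \<Longrightarrow> \<phi> y = 0" by blast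
      show ?thesis
      proof (rule that[of "q x0"])
        fix x
        show "q x = 0 \<or> q x = q x0"
        proof (cases "\<exists>r>0. \<forall>y. \<bar>y - x\<bar> < r \<longrightarrow> \<phi> y = 0")
          case True
          then obtain r where r: "r > 0" "\<And>y. \<bar>y - x\<bar> < r \<Longrightarrow> \<phi> y = 0" by blast
          have "(1 + \<eta> x)\<^sup>2 = (1 + \<eta> x0)\<^sup>2"
            by (rule claimK[OF A H L\<eta> c\<phi> c\<eta> E1, of "min r r0"]) (use r x0 in auto)
          then show ?thesis by (simp add: q_def)
        next
          case False
          then show ?thesis using bnd[of x] by (simp add: q_def)
        qed
      qed
    next
      case False
      show ?thesis
      proof (rule that[of 0])
        fix x show "q x = 0 \<or> q x = 0" using False bnd[of x] by (simp add: q_def)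
      qed
    qed
    have qc: "q x = q 0" for x by (rule two_val_const[OF cq K])
    have "(q \<longlongrightarrow> (1 + 0)\<^sup>2) at_infinity" unfolding q_def[abs_def] by (intro tendsto_intros l\<eta>)
    then have "q 0 = 1" using lim_inf_const[where f=q and y=0, OF _ qc] by simp
    then have q1: "(1 + \<eta> x)\<^sup>2 = 1" for x using qc[of x] by (simp add: q_def)
    have \<phi>0: "\<phi> x = 0" for x
    proof -
      have "1 + \<eta> x \<noteq> 0" using q1[of x] by auto
      then show ?thesis using P[of x] by simp
    qed
    have e2: "\<eta> x = 0 \<or> \<eta> x = -2" for x
    proof -
      have "(1 + \<eta> x - 1) * (1 + \<eta> x + 1) = 0" using q1[of x] by (simp add: power2_eq_square algebra_simps)
      then show ?thesis by auto
    qed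
    have ec: "\<eta> x = \<eta> 0" for x by (rule two_val_const[OF c\<eta> e2])
    have "\<eta> 0 = 0" using lim_inf_const[where f=\<eta> and y=0, OF l\<eta> ec] .
    then show False using NT \<phi>0 ec by auto
  qed
  moreover have "\<phi> x \<noteq> c" for x
  proof
    assume "\<phi> x = c"
    then show False using F2z[of x] cnz by (simp add: algebra_simps)
  qed
  ultimately show ?thesis by blast
qed

end
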